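(* Let $\{X_k, k\in\mathbb{N}_+\}$ be a sequence of centered, integer-valued i.i.d. random variables in the domain of attraction of an $\alpha$-stable law with $\alpha\in(0,1)$, i.e. for each $x\in\mathbb{R}$, $\mathbb{P}(n^{-1/\alpha}S_n\le x)\to F_\alpha(x)$ as $n\to\infty$, where $S_n=X_1+\cdots+X_n$ and $F_\alpha$ is the distribution function of a stable law with characteristic function $\varphi(\theta)=\exp(-|\theta|^\alpha(C_1+iC_2\,\mathrm{sgn}\,\theta))$. Let $\{\xi(k),k\in\mathbb{Z}\}$ be a stationary sequence of real random variables, independent of $\{X_k\}$, and let $(u_n)$ be a sequence of reals such that $n\,\mathbb{P}(\xi(0)>u_n)\to\tau$ as $n\to\infty$ for some $\tau\ge 0$. Assume that $\{\xi(k)\}$ satisfies the conditions $D(u_n)$ and $D'(u_n)$ (defined in the context). Then for almost every realization of $\{S_n,n\in\mathbb{N}_+\}$, $$\mathbb{P}\Big(\max_{k\le n}\xi(S_k)\le u_n\Big)\xrightarrow[n\to\infty]{} e^{-\tau q},$$ where $q=\mathbb{P}(\forall k\in\mathbb{N}_+,\ S_k\neq 0)$ and the probability on the left is with respect to the scenery $\{\xi(k)\}$ with the realization of the walk held fixed.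
   Context: For integers $i_1<\cdots<i_p$ and $u\in\mathbb{R}$, write $F_{i_1,\ldots,i_p}(u)=\mathbb{P}(\xi(i_1)\le u,\ldots,\xi(i_p)\le u)$. Condition $D(u_n)$: there exist a family $(\alpha_{n,l})_{(n,l)\in\mathbb{N}^2}$ and a sequence $(l_n)$ of positive integers with $\alpha_{n,l_n}\to0$, $l_n=o(n)$, such that $|F_{i_1,\ldots,i_p,j_1,\ldots,j_{p'}}(u_n)-F_{i_1,\ldots,i_p}(u_n)F_{j_1,\ldots,j_{p'}}(u_n)|\le\alpha_{n,l}$ for all integers $i_1<\cdots<i_p<j_1<\cdots<j_{p'}$ with $j_1-i_p\ge l$, uniformly in $p,p'$. Condition $D'(u_n)$: there exists a sequence of integers $(k_n)$ with $k_n\to\infty$, $\frac{n^2}{k_n}\alpha_{n,l_n}\to0$ and $k_nl_n=o(n)$ (with $(\alpha_{n,l})$, $(l_n)$ from $D(u_n)$), such that $\lim_{n\to\infty} n\sum_{j=1}^{\lfloor n/k_n\rfloor}\mathbb{P}(\xi(0)>u_n,\xi(j)>u_n)=0$. *)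

theory Defs
  imports "HOL-Probability.Probability"
begin

text \<open>Joint non-exceedance probability F_I(u) = P(xi(i) <= u for all i in I),
  for a finite set I of integer indices (the increasing tuple i_1 < ... < i_p).\<close>
definition jointF :: "'b measure \<Rightarrow> (int \<Rightarrow> 'b \<Rightarrow> real) \<Rightarrow> int set \<Rightarrow> real \<Rightarrow> real" where
  "jointF N \<xi> I u = measure N {\<eta> \<in> space N. \<forall>i\<in>I. \<xi> i \<eta> \<le> u}"

definition stationary_seq :: "'b measure \<Rightarrow> (int \<Rightarrow> 'b \<Rightarrow> real) \<Rightarrow> bool" where
  "stationary_seq N \<xi> \<longleftrightarrow>
     (\<forall>h::int. distr N (Pi\<^sub>M UNIV (\<lambda>_. borel)) (\<lambda>\<eta> k. \<xi> (k + h) \<eta>)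
             = distr N (Pi\<^sub>M UNIV (\<lambda>_. borel)) (\<lambda>\<eta> k. \<xi> k \<eta>))"

definition condD ::
  "'b measure \<Rightarrow> (int \<Rightarrow> 'b \<Rightarrow> real) \<Rightarrow> (nat \<Rightarrow> real) \<Rightarrow> (nat \<Rightarrow> nat \<Rightarrow> real) \<Rightarrow> (nat \<Rightarrow> nat) \<Rightarrow> bool" where
  "condD N \<xi> u a l \<longleftrightarrow>
     (\<forall>n. l n > 0) \<and>
     (\<lambda>n. a n (l n)) \<longlonglongrightarrow> 0 \<and>
     (\<lambda>n. real (l n) / real n) \<longlonglongrightarrow> 0 \<and>
     (\<forall>n m I J. finite I \<and> finite J \<and> I \<noteq> {} \<and> J \<noteq> {} \<and>
        (\<forall>i\<in>I. \<forall>j\<in>J. i + int m \<le> j) \<longrightarrow>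
        \<bar>jointF N \<xi> (I \<union> J) (u n) - jointF N \<xi> I (u n) * jointF N \<xi> J (u n)\<bar> \<le> a n m)"

definition condD' ::
  "'b measure \<Rightarrow> (int \<Rightarrow> 'b \<Rightarrow> real) \<Rightarrow> (nat \<Rightarrow> real) \<Rightarrow> (nat \<Rightarrow> nat \<Rightarrow> real) \<Rightarrow> (nat \<Rightarrow> nat) \<Rightarrow> bool" where
  "condD' N \<xi> u a l \<longleftrightarrow>
     (\<exists>k :: nat \<Rightarrow> nat.
        filterlim k at_top sequentially \<and>
        (\<lambda>n. real n ^ 2 / real (k n) * a n (l n)) \<longlonglongrightarrow> 0 \<and>
        (\<lambda>n. real (k n * l n) / real n) \<longlonglongrightarrow> 0 \<and>
        (\<lambda>n. real n * (\<Sum>j=1..n div k n.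
             measure N {\<eta> \<in> space N. \<xi> 0 \<eta> > u n \<and> \<xi> (int j) \<eta> > u n})) \<longlonglongrightarrow> 0)"

end

theory Submission
  imports Defs
begin

locale scen = prob_space N for N :: "'b measure" +
  fixes \<xi> :: "int \<Rightarrow> 'b \<Rightarrow> real"
  assumes xm[measurable]: "\<And>k. \<xi> k \<in> borel_measurable N"
begin

definition Exc :: "int \<Rightarrow> real \<Rightarrow> 'b set" where
  "Exc a u = {\<eta>\<in>space N. \<xi> a \<eta> > u}"

lemma Exc_ev[measurable]: "Exc a u \<in> events"
  unfolding Exc_def by measurable

lemma le_ev[measurable]: "finite I \<Longrightarrow> {\<eta>\<in>space N. \<forall>i\<in>I. \<xi> i \<eta> \<le> u} \<in> events"
  by measurable

lemma F_compl: "finite I \<Longrightarrow> jointF N \<xi> I u = 1 - prob (\<Union>a\<in>I. Exc a u)"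
proof -
  assume fI: "finite I"
  have "{\<eta>\<in>space N. \<forall>i\<in>I. \<xi> i \<eta> \<le> u} = space N - (\<Union>a\<in>I. Exc a u)"
    by (auto simp: Exc_def not_less)
  then show ?thesis unfolding jointF_def
    using fI by (simp add: prob_compl)
qed

lemma F_empty: "jointF N \<xi> {} u = 1"
  unfolding jointF_def by (simp add: prob_space)

lemma F_nonneg: "0 \<le> jointF N \<xi> I u" unfolding jointF_def by simp
lemma F_le1: "jointF N \<xi> I u \<le> 1" unfolding jointF_def by simp

lemma F_mono: "finite J \<Longrightarrow> I \<subseteq> J \<Longrightarrow> jointF N \<xi> J u \<le> jointF N \<xi> I u"
proof -
  assume fJ: "finite J" and IJ: "I \<subseteq> J"
  then have fI: "finite I" by (rule finite_subset[rotated])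
  show ?thesis unfolding jointF_def
    by (rule finite_measure_mono) (use fI IJ in auto)
qed

lemma union_le: "finite I \<Longrightarrow> prob (\<Union>a\<in>I. Exc a u) \<le> (\<Sum>a\<in>I. prob (Exc a u))"
  by (rule finite_measure_subadditive_finite) auto

lemma bonf2:
  assumes "finite I"
  shows "prob (\<Union>a\<in>I. Exc a u) \<ge> (\<Sum>a\<in>I. prob (Exc a u))
           - (\<Sum>x\<in>{x\<in>I\<times>I. fst x < snd x}. prob (Exc (fst x) u \<inter> Exc (snd x) u))"
  using assms
proof (induction I rule: finite_linorder_max_induct)
  case empty
  then show ?case by simp
next
  case (insert b A)
  have fA: "finite A" by fact
  have bA: "b \<notin> A" using insert.hyps(2) by auto
  have pairs: "{x\<in>insert b A \<times> insert b A. fst x < snd x} =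
      {x\<in>A\<times>A. fst x < snd x} \<union> (\<lambda>a. (a,b)) ` A"
    using insert.hyps(2) by auto
  have disj: "{x\<in>A\<times>A. fst x < snd x} \<inter> (\<lambda>a. (a,b)) ` A = {}" using bA by auto
  have sumP: "(\<Sum>x\<in>{x\<in>insert b A \<times> insert b A. fst x < snd x}. prob (Exc (fst x) u \<inter> Exc (snd x) u))
     = (\<Sum>x\<in>{x\<in>A\<times>A. fst x < snd x}. prob (Exc (fst x) u \<inter> Exc (snd x) u))
       + (\<Sum>a\<in>A. prob (Exc a u \<inter> Exc b u))"
    unfolding pairs using fA disj
    by (subst sum.union_disjoint) (auto simp: sum.reindex inj_on_def)
  have eq: "prob (\<Union>a\<in>insert b A. Exc a u) = prob (Exc b u) + prob (\<Union>a\<in>A. Exc a u) - prob (Exc b u \<inter> (\<Union>a\<in>A. Exc a u))"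
    using measure_Un3[of "Exc b u" N "\<Union>a\<in>A. Exc a u"] fA by (simp add: fmeasurable_def less_top[symmetric])
  have le: "prob (Exc b u \<inter> (\<Union>a\<in>A. Exc a u)) \<le> (\<Sum>a\<in>A. prob (Exc a u \<inter> Exc b u))"
  proof -
    have "Exc b u \<inter> (\<Union>a\<in>A. Exc a u) = (\<Union>a\<in>A. Exc a u \<inter> Exc b u)" by auto
    moreover have "prob (\<Union>a\<in>A. Exc a u \<inter> Exc b u) \<le> (\<Sum>a\<in>A. prob (Exc a u \<inter> Exc b u))"
      by (rule finite_measure_subadditive_finite) (use fA in auto)
    ultimately show ?thesis by simp
  qed
  have s1: "(\<Sum>a\<in>insert b A. prob (Exc a u)) = prob (Exc b u) + (\<Sum>a\<in>A. prob (Exc a u))"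
    using fA bA by (simp add: sum.insert)
  show ?case unfolding sumP s1 using eq le insert.IH by linarith
qed

end

lemma rank_mono:
  fixes V :: "int set"
  assumes "finite V" "v \<in> V" "w \<in> V" "v < w"
  shows "card {x\<in>V. x < v} < card {x\<in>V. x < w}"
  by (rule psubset_card_mono) (use assms in auto)

lemma rank_less:
  fixes V :: "int set"
  assumes "finite V" "v \<in> V"
  shows "card {x\<in>V. x < v} < card V"
  by (rule psubset_card_mono) (use assms in auto)

lemma card_div_class:
  fixes R K i :: nat
  assumes K: "K > 0"
  shows "real (card {r. r < R \<and> r * K div R = i}) \<le> real R / real K + 1"
proof (cases "{r. r < R \<and> r * K div R = i} = {}")
  case True then show ?thesis unfolding True by simp
next
  case False
  define T where "T = {r. r < R \<and> r * K div R = i}"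
  have fT: "finite T" unfolding T_def by simp
  define m where "m = Min T"
  have mT: "m \<in> T" using False fT unfolding m_def T_def by (intro Min_in) auto
  have R0: "R > 0" using mT unfolding T_def by auto
  have lo: "i * R \<le> r * K" if "r \<in> T" for r
  proof -
    have "i = r * K div R" using that unfolding T_def by auto
    then show ?thesis by (metis div_times_less_eq_dividend mult.commute)
  qed
  have hi: "r * K < (i+1) * R" if "r \<in> T" for r
  proof -
    have "i = r * K div R" using that unfolding T_def by auto
    then show ?thesis using R0 by (metis add.commute dividend_less_div_times mult.commute mult_Suc plus_1_eq_Suc)
  qed
  have sub: "T \<subseteq> {m..m + (R - 1) div K}"
  proof
    fix r assume r: "r \<in> T"
    have mr: "m \<le> r" using r fT unfolding m_def by simp
    have "(r - m) * K < R"
    proof -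
      have h1: "r * K < i * R + R" using hi[OF r] by (simp add: algebra_simps)
      have "r * K < m * K + R" using h1 lo[OF mT] by linarith
      then show ?thesis using R0 unfolding diff_mult_distrib by arith
    qed
    then have "(r - m) * K \<le> R - 1" by linarith
    then have "r - m \<le> (R - 1) div K" using K by (simp add: less_eq_div_iff_mult_less_eq)
    then show "r \<in> {m..m + (R - 1) div K}" using mr by auto
  qed
  have "card T \<le> (R - 1) div K + 1"
    using card_mono[OF _ sub] by simp
  moreover have "real ((R - 1) div K) \<le> real R / real K"
  proof -
    have a: "(R - 1) div K * K \<le> R" by (metis div_times_less_eq_dividend le_trans diff_le_self)
    have "real ((R - 1) div K) * real K \<le> real R" using a by (metis of_nat_le_iff of_nat_mult)
    then show "real ((R - 1) div K) \<le> real R / real K" using K by (simp add: pos_le_divide_eq)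
  qed
  ultimately show ?thesis unfolding T_def[symmetric] by linarith
qed

lemma chunks:
  fixes V :: "int set" and K l :: nat
  assumes fV: "finite V" and K: "K > 0"
  shows "\<exists>(G::nat \<Rightarrow> int set) (c::int \<Rightarrow> nat).
     (\<forall>i. G i \<subseteq> {v\<in>V. c v = i}) \<and>
     (\<forall>i j v w. i < j \<longrightarrow> v \<in> G i \<longrightarrow> w \<in> G j \<longrightarrow> v + int l \<le> w) \<and>
     card (V - (\<Union>i<K. G i)) \<le> K * l \<and>
     (\<forall>i. real (card {v\<in>V. c v = i}) \<le> real (card V) / real K + 1)"
proof -
  define R where "R = card V"
  define rk where "rk v = card {x\<in>V. x < v}" for v
  define c where "c v = rk v * K div R" for v
  define G where "G i = {v\<in>V. c v = i \<and> (\<forall>w\<in>V. c w > i \<longrightarrow> v + int l \<le> w)}" for i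
  have cmono: "c v \<le> c w" if "v \<in> V" "w \<in> V" "v \<le> w" for v w
  proof (cases "v = w")
    case False
    then have "rk v < rk w" using rank_mono[OF fV that(1,2)] that(3) unfolding rk_def by auto
    then show ?thesis unfolding c_def by (simp add: div_le_mono)
  qed simp
  have cK: "c v < K" if "v \<in> V" for v
  proof -
    have r: "rk v < R" using rank_less[OF fV that] unfolding rk_def R_def .
    then have "rk v * K < R * K" using K by simp
    then show ?thesis unfolding c_def by (simp add: div_less_iff_less_mult mult.commute)
  qed
  have p1: "\<forall>i. G i \<subseteq> {v\<in>V. c v = i}" unfolding G_def by auto
  have p2: "\<forall>i j v w. i < j \<longrightarrow> v \<in> G i \<longrightarrow> w \<in> G j \<longrightarrow> v + int l \<le> w"
    unfolding G_def by auto
  have p3: "card (V - (\<Union>i<K. G i)) \<le> K * l"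
  proof -
    define mi where "mi i = Min {w\<in>V. c w > i}" for i
    have sub: "V - (\<Union>i<K. G i) \<subseteq> (\<Union>i<K. {mi i - int l ..< mi i})"
    proof
      fix v assume v: "v \<in> V - (\<Union>i<K. G i)"
      then have vV: "v \<in> V" by auto
      let ?i = "c v"
      have iK: "?i < K" using cK vV .
      have "v \<notin> G ?i" using v iK by auto
      then obtain w where w: "w \<in> V" "c w > ?i" "w < v + int l" using vV unfolding G_def by force
      have ne: "{w\<in>V. c w > ?i} \<noteq> {}" using w by auto
      have fin: "finite {w\<in>V. c w > ?i}" using fV by simp
      have mV: "mi ?i \<in> {w\<in>V. c w > ?i}" unfolding mi_def using Min_in[OF fin ne] .
      have mw: "mi ?i \<le> w" unfolding mi_def using Min_le[OF fin] w by auto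
      have vm: "v < mi ?i"
      proof (rule ccontr)
        assume "\<not> v < mi ?i"
        then have "c (mi ?i) \<le> c v" using cmono[of "mi ?i" v] mV vV by auto
        then show False using mV by auto
      qed
      show "v \<in> (\<Union>i<K. {mi i - int l ..< mi i})"
        using iK vm mw w(3) by (intro UN_I[of "c v"]) auto
    qed
    have "card (V - (\<Union>i<K. G i)) \<le> card (\<Union>i<K. {mi i - int l ..< mi i})"
      by (rule card_mono[OF _ sub]) auto
    also have "\<dots> \<le> (\<Sum>i<K. card {mi i - int l ..< mi i})" by (rule card_UN_le) auto
    also have "\<dots> = K * l" by simp
    finally show ?thesis .
  qed
  have p4: "\<forall>i. real (card {v\<in>V. c v = i}) \<le> real (card V) / real K + 1"
  proof
    fix i
    have inj: "inj_on rk V"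
    proof (rule inj_onI)
      fix x y assume "x \<in> V" "y \<in> V" "rk x = rk y"
      then show "x = y" using rank_mono[OF fV, of x y] rank_mono[OF fV, of y x] unfolding rk_def
        by (metis less_irrefl linorder_neqE)
    qed
    have "card {v\<in>V. c v = i} = card (rk ` {v\<in>V. c v = i})"
      by (rule card_image[symmetric]) (rule inj_on_subset[OF inj], auto)
    also have "\<dots> \<le> card {r. r < R \<and> r * K div R = i}"
    proof (rule card_mono)
      show "finite {r. r < R \<and> r * K div R = i}" by simp
      show "rk ` {v\<in>V. c v = i} \<subseteq> {r. r < R \<and> r * K div R = i}"
        using rank_less[OF fV] unfolding rk_def c_def R_def by auto
    qed
    finally have "real (card {v\<in>V. c v = i}) \<le> real (card {r. r < R \<and> r * K div R = i})" by simp
    also have "\<dots> \<le> real R / real K + 1" by (rule card_div_class[OF K])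
    finally show "real (card {v\<in>V. c v = i}) \<le> real (card V) / real K + 1" unfolding R_def .
  qed
  show ?thesis using p1 p2 p3 p4 by blast
qed

lemma pair_bound:
  fixes V :: "int set" and w :: "int \<times> int \<Rightarrow> real" and c :: "int \<Rightarrow> nat"
  assumes fV: "finite V"
    and w0: "\<And>a b. a \<in> V \<Longrightarrow> b \<in> V \<Longrightarrow> a < b \<Longrightarrow> 0 \<le> w (a,b)"
    and wnear: "\<And>a b. a \<in> V \<Longrightarrow> b \<in> V \<Longrightarrow> a < b \<Longrightarrow> b - a \<le> int D \<Longrightarrow> w (a,b) \<le> \<pi> (nat (b - a))"
    and wfar: "\<And>a b. a \<in> V \<Longrightarrow> b \<in> V \<Longrightarrow> a < b \<Longrightarrow> b - a > int D \<Longrightarrow> w (a,b) \<le> \<beta>"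
    and \<pi>0: "\<And>d. 0 \<le> \<pi> d" and \<beta>0: "0 \<le> \<beta>"
    and cls: "\<And>i. real (card {v\<in>V. c v = i}) \<le> C"
  shows "(\<Sum>x\<in>{x\<in>V\<times>V. fst x < snd x \<and> c (fst x) = c (snd x)}. w x)
          \<le> real (card V) * (\<Sum>d=1..D. \<pi> d) + real (card V) * C * \<beta>"
proof -
  let ?P = "{x\<in>V\<times>V. fst x < snd x \<and> c (fst x) = c (snd x)}"
  let ?Near = "{x\<in>?P. snd x - fst x \<le> int D}"
  let ?Far = "{x\<in>?P. snd x - fst x > int D}"
  have fP: "finite ?P" using fV by (auto intro: finite_subset[of _ "V\<times>V"])
  have split: "?P = ?Near \<union> ?Far" by auto
  have fN: "finite ?Near" using fP by (rule finite_subset[rotated]) auto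
  have fF: "finite ?Far" using fP by (rule finite_subset[rotated]) auto
  have "(\<Sum>x\<in>?P. w x) = (\<Sum>x\<in>?Near. w x) + (\<Sum>x\<in>?Far. w x)"
    by (subst split, rule sum.union_disjoint) (use fN fF in auto)
  moreover have "(\<Sum>x\<in>?Near. w x) \<le> real (card V) * (\<Sum>d=1..D. \<pi> d)"
  proof -
    let ?h = "\<lambda>x::int\<times>int. \<pi> (nat (snd x - fst x))"
    let ?f = "\<lambda>y::int\<times>nat. (fst y, fst y + int (snd y))"
    have "(\<Sum>x\<in>?Near. w x) \<le> (\<Sum>x\<in>?Near. ?h x)"
      by (rule sum_mono) (auto intro!: wnear)
    also have "\<dots> \<le> (\<Sum>x\<in>?f ` (V \<times> {1..D}). ?h x)"
    proof (rule sum_mono2)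
      show "finite (?f ` (V \<times> {1..D}))" using fV by simp
      show "?Near \<subseteq> ?f ` (V \<times> {1..D})"
      proof
        fix x assume x: "x \<in> ?Near"
        obtain a b where ab: "x = (a,b)" by fastforce
        have "(a, nat (b - a)) \<in> V \<times> {1..D}" using x ab by auto
        moreover have "x = ?f (a, nat (b - a))" using x ab by auto
        ultimately show "x \<in> ?f ` (V \<times> {1..D})" by blast
      qed
      show "\<And>b. b \<in> ?f ` (V \<times> {1..D}) - ?Near \<Longrightarrow> 0 \<le> ?h b" using \<pi>0 by simp
    qed
    also have "\<dots> = (\<Sum>y\<in>V \<times> {1..D}. ?h (?f y))"
      by (rule sum.reindex_cong[where l="?f"]) (auto simp: inj_on_def)
    also have "\<dots> = (\<Sum>y\<in>V \<times> {1..D}. \<pi> (snd y))" by (rule sum.cong) auto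
    also have "\<dots> = (\<Sum>a\<in>V. \<Sum>d=1..D. \<pi> d)"
      by (subst sum.cartesian_product) (simp add: case_prod_beta)
    also have "\<dots> = real (card V) * (\<Sum>d=1..D. \<pi> d)" by simp
    finally show ?thesis .
  qed
  moreover have "(\<Sum>x\<in>?Far. w x) \<le> real (card V) * C * \<beta>"
  proof -
    have "(\<Sum>x\<in>?Far. w x) \<le> (\<Sum>x\<in>?Far. \<beta>)"
      by (rule sum_mono) (auto intro!: wfar)
    also have "\<dots> = real (card ?Far) * \<beta>" by simp
    also have "\<dots> \<le> real (card V) * C * \<beta>"
    proof (rule mult_right_mono[OF _ \<beta>0])
      have "?Far \<subseteq> Sigma V (\<lambda>a. {b\<in>V. c b = c a})" by auto
      then have "card ?Far \<le> card (Sigma V (\<lambda>a. {b\<in>V. c b = c a}))"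
        by (rule card_mono[rotated]) (use fV in auto)
      also have "\<dots> = (\<Sum>a\<in>V. card {b\<in>V. c b = c a})"
        by (rule card_SigmaI) (use fV in auto)
      finally have "real (card ?Far) \<le> (\<Sum>a\<in>V. real (card {b\<in>V. c b = c a}))"
        by (simp only: of_nat_sum[symmetric] of_nat_le_iff)
      also have "\<dots> \<le> (\<Sum>a\<in>V. C)" by (rule sum_mono) (rule cls)
      also have "\<dots> = real (card V) * C" by simp
      finally show "real (card ?Far) \<le> real (card V) * C" .
    qed
    finally show ?thesis .
  qed
  ultimately show ?thesis by linarith
qed

context scen
begin

lemma stat_set:
  assumes stat: "stationary_seq N \<xi>" and Q: "Q \<in> sets (Pi\<^sub>M (UNIV::int set) (\<lambda>_. borel))"
  shows "prob {\<eta>\<in>space N. (\<lambda>k. \<xi> (k + h) \<eta>) \<in> Q} = prob {\<eta>\<in>space N. (\<lambda>k. \<xi> k \<eta>) \<in> Q}"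
proof -
  have m1: "(\<lambda>\<eta> k. \<xi> (k + h) \<eta>) \<in> N \<rightarrow>\<^sub>M Pi\<^sub>M UNIV (\<lambda>_. borel)"
    by (rule measurable_PiM_single') (auto simp: space_PiM)
  have m2: "(\<lambda>\<eta> k. \<xi> k \<eta>) \<in> N \<rightarrow>\<^sub>M Pi\<^sub>M UNIV (\<lambda>_. borel)"
    by (rule measurable_PiM_single') (auto simp: space_PiM)
  have eq: "distr N (Pi\<^sub>M UNIV (\<lambda>_. borel)) (\<lambda>\<eta> k. \<xi> (k + h) \<eta>)
             = distr N (Pi\<^sub>M UNIV (\<lambda>_. borel)) (\<lambda>\<eta> k. \<xi> k \<eta>)"
    using stat unfolding stationary_seq_def by blast
  have "measure (distr N (Pi\<^sub>M UNIV (\<lambda>_. borel)) (\<lambda>\<eta> k. \<xi> (k + h) \<eta>)) Q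
      = measure (distr N (Pi\<^sub>M UNIV (\<lambda>_. borel)) (\<lambda>\<eta> k. \<xi> k \<eta>)) Q" by (simp only: eq)
  then have "measure N ((\<lambda>\<eta> k. \<xi> (k + h) \<eta>) -` Q \<inter> space N) = measure N ((\<lambda>\<eta> k. \<xi> k \<eta>) -` Q \<inter> space N)"
    using Q m1 m2 by (simp add: measure_distr)
  then show ?thesis by (simp add: vimage_def Int_def conj_commute)
qed

lemma stat_single:
  assumes stat: "stationary_seq N \<xi>"
  shows "prob (Exc a u) = prob (Exc 0 u)"
proof -
  have Q: "{f::int\<Rightarrow>real. f 0 > u} \<in> sets (Pi\<^sub>M (UNIV::int set) (\<lambda>_. borel))"
  proof -
    have "{f::int\<Rightarrow>real. f 0 > u} = {f \<in> space (Pi\<^sub>M (UNIV::int set) (\<lambda>_. borel)). f 0 > u}"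
      by (simp add: space_PiM)
    also have "\<dots> \<in> sets (Pi\<^sub>M (UNIV::int set) (\<lambda>_. borel))" by measurable
    finally show ?thesis .
  qed
  show ?thesis using stat_set[OF stat Q, of a] unfolding Exc_def by simp
qed

lemma stat_pair:
  assumes stat: "stationary_seq N \<xi>"
  shows "prob (Exc a u \<inter> Exc b u) = prob (Exc 0 u \<inter> Exc (b - a) u)"
proof -
  have Q: "{f::int\<Rightarrow>real. f 0 > u \<and> f (b - a) > u} \<in> sets (Pi\<^sub>M (UNIV::int set) (\<lambda>_. borel))"
  proof -
    have "{f::int\<Rightarrow>real. f 0 > u \<and> f (b - a) > u} = {f \<in> space (Pi\<^sub>M (UNIV::int set) (\<lambda>_. borel)). f 0 > u \<and> f (b - a) > u}"
      by (simp add: space_PiM)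
    also have "\<dots> \<in> sets (Pi\<^sub>M (UNIV::int set) (\<lambda>_. borel))" by measurable
    finally show ?thesis .
  qed
  have "Exc a u \<inter> Exc b u = {\<eta>\<in>space N. (\<lambda>k. \<xi> (k + a) \<eta>) \<in> {f. f 0 > u \<and> f (b - a) > u}}"
    unfolding Exc_def by auto
  moreover have "Exc 0 u \<inter> Exc (b - a) u = {\<eta>\<in>space N. (\<lambda>k. \<xi> k \<eta>) \<in> {f. f 0 > u \<and> f (b - a) > u}}"
    unfolding Exc_def by auto
  ultimately show ?thesis using stat_set[OF stat Q, of a] by simp
qed

lemma prodD:
  assumes Dm: "\<And>I J. finite I \<Longrightarrow> finite J \<Longrightarrow> I \<noteq> {} \<Longrightarrow> J \<noteq> {} \<Longrightarrow>
        (\<forall>i\<in>I. \<forall>j\<in>J. i + int m \<le> j) \<Longrightarrow>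
        \<bar>jointF N \<xi> (I \<union> J) u - jointF N \<xi> I u * jointF N \<xi> J u\<bar> \<le> \<alpha>"
    and a0: "0 \<le> \<alpha>"
    and fG: "\<And>i. finite (G i)"
    and sep: "\<And>i j v w. i < j \<Longrightarrow> v \<in> G i \<Longrightarrow> w \<in> G j \<Longrightarrow> v + int m \<le> w"
  shows "\<bar>jointF N \<xi> (\<Union>i<K. G i) u - (\<Prod>i<K. jointF N \<xi> (G i) u)\<bar> \<le> real K * \<alpha>"
proof (induction K)
  case 0
  then show ?case by (simp add: F_empty)
next
  case (Suc K)
  let ?I = "\<Union>i<K. G i" and ?J = "G K"
  have un: "(\<Union>i<Suc K. G i) = ?I \<union> ?J" by (auto simp: lessThan_Suc)
  have pr: "(\<Prod>i<Suc K. jointF N \<xi> (G i) u) = (\<Prod>i<K. jointF N \<xi> (G i) u) * jointF N \<xi> ?J u"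
    by simp
  have step: "\<bar>jointF N \<xi> (?I \<union> ?J) u - jointF N \<xi> ?I u * jointF N \<xi> ?J u\<bar> \<le> \<alpha>"
  proof (cases "?I = {} \<or> ?J = {}")
    case True
    then show ?thesis using a0 by (auto simp: F_empty)
  next
    case False
    show ?thesis
    proof (rule Dm)
      show "finite ?I" using fG by simp
      show "finite ?J" using fG by simp
      show "?I \<noteq> {}" "?J \<noteq> {}" using False by auto
      show "\<forall>i\<in>?I. \<forall>j\<in>?J. i + int m \<le> j" using sep by blast
    qed
  qed
  have b: "\<bar>jointF N \<xi> ?I u * jointF N \<xi> ?J u - (\<Prod>i<K. jointF N \<xi> (G i) u) * jointF N \<xi> ?J u\<bar>
      \<le> real K * \<alpha>"
  proof -
    have "\<bar>jointF N \<xi> ?I u * jointF N \<xi> ?J u - (\<Prod>i<K. jointF N \<xi> (G i) u) * jointF N \<xi> ?J u\<bar>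
        = \<bar>jointF N \<xi> ?I u - (\<Prod>i<K. jointF N \<xi> (G i) u)\<bar> * jointF N \<xi> ?J u"
      by (simp add: abs_mult F_nonneg left_diff_distrib[symmetric])
    also have "\<dots> \<le> \<bar>jointF N \<xi> ?I u - (\<Prod>i<K. jointF N \<xi> (G i) u)\<bar>"
      using F_le1[of ?J u] by (simp add: mult_left_le)
    finally show ?thesis using Suc.IH by linarith
  qed
  show ?case unfolding un pr using step b by (simp add: algebra_simps)
qed

end

lemma prod_diff_le:
  fixes x y :: "nat \<Rightarrow> real"
  assumes "finite A" "\<And>i. i \<in> A \<Longrightarrow> 0 \<le> y i \<and> y i \<le> x i \<and> x i \<le> 1"
  shows "(\<Prod>i\<in>A. x i) - (\<Prod>i\<in>A. y i) \<le> (\<Sum>i\<in>A. x i - y i)"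
  using assms
proof (induction A rule: finite_induct)
  case empty then show ?case by simp
next
  case (insert a A)
  have h: "\<And>i. i \<in> A \<Longrightarrow> 0 \<le> y i \<and> y i \<le> x i \<and> x i \<le> 1" using insert by auto
  have ha: "0 \<le> y a" "y a \<le> x a" "x a \<le> 1" using insert by auto
  have IH: "(\<Prod>i\<in>A. x i) - (\<Prod>i\<in>A. y i) \<le> (\<Sum>i\<in>A. x i - y i)" using insert.IH h by blast
  have py0: "0 \<le> (\<Prod>i\<in>A. y i)" using h by (simp add: prod_nonneg)
  have py1: "(\<Prod>i\<in>A. y i) \<le> 1"
  proof (rule prod_le_1)
    fix i assume "i \<in> A" then show "0 \<le> y i \<and> y i \<le> 1" using h[of i] by linarith
  qed
  have pxy: "(\<Prod>i\<in>A. y i) \<le> (\<Prod>i\<in>A. x i)" using h by (intro prod_mono) auto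
  have "x a * (\<Prod>i\<in>A. x i) - y a * (\<Prod>i\<in>A. y i)
      = x a * ((\<Prod>i\<in>A. x i) - (\<Prod>i\<in>A. y i)) + (x a - y a) * (\<Prod>i\<in>A. y i)"
    by (simp add: algebra_simps)
  also have "\<dots> \<le> ((\<Prod>i\<in>A. x i) - (\<Prod>i\<in>A. y i)) + (x a - y a)"
  proof (rule add_mono)
    show "x a * ((\<Prod>i\<in>A. x i) - (\<Prod>i\<in>A. y i)) \<le> (\<Prod>i\<in>A. x i) - (\<Prod>i\<in>A. y i)"
      using ha pxy by (simp add: mult_left_le_one_le)
    show "(x a - y a) * (\<Prod>i\<in>A. y i) \<le> x a - y a"
      using ha py1 by (simp add: mult_left_le)
  qed
  finally show ?case using insert.hyps IH by simp
qed

lemma exp_le_one_minus: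
  fixes s :: real
  assumes "0 \<le> s" "s \<le> 1/2"
  shows "exp (- s - 2 * s\<^sup>2) \<le> 1 - s"
proof -
  have "exp (- s - 2 * s\<^sup>2) \<le> exp (ln (1 - s))"
    using ln_one_minus_pos_lower_bound[OF assms] by simp
  also have "\<dots> = 1 - s" using assms by simp
  finally show ?thesis .
qed

context scen
begin

lemma F_single: "prob (Exc a u) = p \<Longrightarrow> jointF N \<xi> {a} u = 1 - p"
  by (simp add: F_compl)

lemma per_n:
  fixes V :: "int set" and K l D :: nat and u \<alpha> p :: real and \<pi> :: "nat \<Rightarrow> real"
  assumes stat: "stationary_seq N \<xi>"
    and fV: "finite V" and K: "K > 0"
    and Dm: "\<And>I J. finite I \<Longrightarrow> finite J \<Longrightarrow> I \<noteq> {} \<Longrightarrow> J \<noteq> {} \<Longrightarrow>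
        (\<forall>i\<in>I. \<forall>j\<in>J. i + int l \<le> j) \<Longrightarrow>
        \<bar>jointF N \<xi> (I \<union> J) u - jointF N \<xi> I u * jointF N \<xi> J u\<bar> \<le> \<alpha>"
    and a0: "0 \<le> \<alpha>"
    and lD: "l \<le> D + 1"
    and p_def: "p = prob (Exc 0 u)"
    and \<pi>_def: "\<And>d. \<pi> d = prob (Exc 0 u \<inter> Exc (int d) u)"
    and small: "(real (card V) / real K + 1) * p \<le> 1/2"
  shows "jointF N \<xi> V u \<le> exp (- ((real (card V) - real (K * l)) * p))
            + (real (card V) * (\<Sum>d=1..D. \<pi> d) + real (card V) * (real (card V) / real K + 1) * (p\<^sup>2 + \<alpha>))
            + real K * \<alpha>"
    and "exp (- (real (card V) * p) - 2 * ((real (card V) / real K + 1) * p) * (real (card V) * p))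
            - (real (card V) * (\<Sum>d=1..D. \<pi> d) + real (card V) * (real (card V) / real K + 1) * (p\<^sup>2 + \<alpha>))
            - real K * \<alpha> - real (K * l) * p \<le> jointF N \<xi> V u"
proof -
  define R where "R = card V"
  define C where "C = real R / real K + 1"
  define E where "E = real R * (\<Sum>d=1..D. \<pi> d) + real R * C * (p\<^sup>2 + \<alpha>)"
  obtain G c where Gc: "\<forall>i. G i \<subseteq> {v\<in>V. c v = i}"
    and sep: "\<forall>i j v w. i < j \<longrightarrow> v \<in> G i \<longrightarrow> w \<in> G j \<longrightarrow> v + int l \<le> w"
    and cB: "card (V - (\<Union>i<K. G i)) \<le> K * l"
    and cls: "\<forall>i. real (card {v\<in>V. c v = i}) \<le> real (card V) / real K + 1"
    using chunks[OF fV K, of l] by blast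
  define U where "U = (\<Union>i<K. G i)"
  define B where "B = V - U"
  have GV: "G i \<subseteq> V" for i using Gc by auto
  have fG: "finite (G i)" for i using GV fV by (rule finite_subset)
  have UV: "U \<subseteq> V" unfolding U_def using GV by auto
  have fU: "finite U" using UV fV by (rule finite_subset)
  have fB: "finite B" unfolding B_def using fV by simp
  have disj: "i \<noteq> j \<Longrightarrow> G i \<inter> G j = {}" for i j using Gc by blast
  have p0: "0 \<le> p" unfolding p_def by simp
  have pa: "prob (Exc a u) = p" for a unfolding p_def by (rule stat_single[OF stat])
  define s where "s i = real (card (G i)) * p" for i
  define e where "e i = (\<Sum>x\<in>{x\<in>G i \<times> G i. fst x < snd x}. prob (Exc (fst x) u \<inter> Exc (snd x) u))" for i
  have cardG: "real (card (G i)) \<le> C" for i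
  proof -
    have "card (G i) \<le> card {v\<in>V. c v = i}" using Gc fV by (intro card_mono) auto
    then show ?thesis using cls unfolding C_def R_def by (meson of_nat_le_iff order_trans)
  qed
  have s0: "0 \<le> s i" for i unfolding s_def using p0 by simp
  have sC: "s i \<le> C * p" for i unfolding s_def using cardG p0 by (simp add: mult_right_mono)
  have s_half: "s i \<le> 1/2" for i using sC[of i] small unfolding C_def R_def by linarith
  have s_le1: "s i \<le> 1" for i using s_half[of i] by linarith
  have Flow: "1 - s i \<le> jointF N \<xi> (G i) u" for i
  proof -
    have "prob (\<Union>a\<in>G i. Exc a u) \<le> (\<Sum>a\<in>G i. prob (Exc a u))" by (rule union_le[OF fG])
    also have "\<dots> = s i" unfolding s_def by (simp add: pa)
    finally show ?thesis using F_compl[OF fG] by simp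
  qed
  have Fupp: "jointF N \<xi> (G i) u \<le> 1 - s i + e i" for i
  proof -
    have "(\<Sum>a\<in>G i. prob (Exc a u)) - e i \<le> prob (\<Union>a\<in>G i. Exc a u)"
      unfolding e_def by (rule bonf2[OF fG])
    moreover have "(\<Sum>a\<in>G i. prob (Exc a u)) = s i" unfolding s_def by (simp add: pa)
    ultimately show ?thesis using F_compl[OF fG] by simp
  qed
  have sum_s: "(\<Sum>i<K. s i) = real (card U) * p"
  proof -
    have "card U = (\<Sum>i<K. card (G i))" unfolding U_def
      by (rule card_UN_disjoint) (auto simp: fG disj)
    then show ?thesis unfolding s_def by (simp add: sum_distrib_right)
  qed
  have cardUV: "real R - real (K * l) \<le> real (card U)" "card U \<le> R"
  proof -
    have "card V = card U + card B" unfolding B_def using fV UV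
      by (metis card_Diff_subset card_mono diff_add_inverse le_add_diff_inverse fU)
    moreover have "real (card B) \<le> real (K * l)" using cB unfolding B_def U_def by (simp only: of_nat_le_iff)
    ultimately show "real R - real (K * l) \<le> real (card U)" unfolding R_def by simp
    show "card U \<le> R" unfolding R_def using card_mono[OF fV UV] .
  qed
  have sum_e: "(\<Sum>i<K. e i) \<le> E"
  proof -
    let ?w = "\<lambda>x. prob (Exc (fst x) u \<inter> Exc (snd x) u)"
    let ?Pi = "\<lambda>i. {x\<in>G i \<times> G i. fst x < snd x}"
    have fPi: "finite (?Pi i)" for i using fG by simp
    have "(\<Sum>i<K. e i) = (\<Sum>x\<in>(\<Union>i<K. ?Pi i). ?w x)"
      unfolding e_def by (rule sum.UNION_disjoint[symmetric]) (auto simp: fPi dest: disj)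
    also have "\<dots> \<le> (\<Sum>x\<in>{x\<in>V\<times>V. fst x < snd x \<and> c (fst x) = c (snd x)}. ?w x)"
    proof (rule sum_mono2)
      show "finite {x\<in>V\<times>V. fst x < snd x \<and> c (fst x) = c (snd x)}"
        using fV by (auto intro: finite_subset[of _ "V\<times>V"])
      show "(\<Union>i<K. ?Pi i) \<subseteq> {x\<in>V\<times>V. fst x < snd x \<and> c (fst x) = c (snd x)}"
      proof
        fix x assume "x \<in> (\<Union>i<K. ?Pi i)"
        then obtain i where "x \<in> ?Pi i" by blast
        then show "x \<in> {x\<in>V\<times>V. fst x < snd x \<and> c (fst x) = c (snd x)}"
          using Gc[rule_format, of i] by (cases x) auto
      qed
    qed simp
    also have "\<dots> \<le> real (card V) * (\<Sum>d=1..D. \<pi> d) + real (card V) * C * (p\<^sup>2 + \<alpha>)"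
    proof (rule pair_bound[OF fV])
      show "\<And>a b. 0 \<le> ?w (a,b)" by simp
      show "\<And>d. 0 \<le> \<pi> d" unfolding \<pi>_def by simp
      show "0 \<le> p\<^sup>2 + \<alpha>" using a0 by simp
      show "\<And>i. real (card {v\<in>V. c v = i}) \<le> C" using cls unfolding C_def R_def by blast
      show "?w (a,b) \<le> \<pi> (nat (b - a))" if "a < b" "b - a \<le> int D" for a b
      proof -
        have "?w (a,b) = prob (Exc 0 u \<inter> Exc (b - a) u)" using stat_pair[OF stat] by simp
        also have "\<dots> = \<pi> (nat (b - a))" unfolding \<pi>_def using that by simp
        finally show ?thesis by simp
      qed
      show "?w (a,b) \<le> p\<^sup>2 + \<alpha>" if "a < b" "b - a > int D" for a b
      proof -
        have sepab: "a + int l \<le> b" using that lD by linarith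
        have dd: "\<bar>jointF N \<xi> ({a} \<union> {b}) u - jointF N \<xi> {a} u * jointF N \<xi> {b} u\<bar> \<le> \<alpha>"
          by (rule Dm) (use sepab in auto)
        have Fab: "jointF N \<xi> {a, b} u = 1 - (2 * p - ?w (a,b))"
        proof -
          have "jointF N \<xi> {a, b} u = 1 - prob (Exc a u \<union> Exc b u)" using F_compl[of "{a,b}"] by simp
          also have "prob (Exc a u \<union> Exc b u) = prob (Exc a u) + prob (Exc b u) - prob (Exc a u \<inter> Exc b u)"
            by (rule measure_Un3) (auto simp: fmeasurable_def less_top[symmetric])
          finally show ?thesis using pa by simp
        qed
        have "jointF N \<xi> {a} u = 1 - p" "jointF N \<xi> {b} u = 1 - p" using F_single pa by auto
        moreover have "{a} \<union> {b} = {a, b}" by auto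
        ultimately have "jointF N \<xi> {a, b} u \<le> (1 - p) * (1 - p) + \<alpha>" using dd by (simp only:)
        then show ?thesis using Fab by (simp add: power2_eq_square algebra_simps)
      qed
    qed
    finally show ?thesis unfolding E_def R_def .
  qed
  have A1: "jointF N \<xi> V u \<le> jointF N \<xi> U u" by (rule F_mono[OF fV UV])
  have prodD': "\<bar>jointF N \<xi> U u - (\<Prod>i<K. jointF N \<xi> (G i) u)\<bar> \<le> real K * \<alpha>"
    unfolding U_def by (rule prodD[OF Dm a0 fG]) (use sep in \<open>blast+\<close>)
  have A3: "(\<Prod>i<K. jointF N \<xi> (G i) u) - (\<Prod>i<K. 1 - s i) \<le> (\<Sum>i<K. e i)"
  proof -
    have "(\<Prod>i<K. jointF N \<xi> (G i) u) - (\<Prod>i<K. 1 - s i) \<le> (\<Sum>i<K. jointF N \<xi> (G i) u - (1 - s i))"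
      by (rule prod_diff_le) (use Flow F_le1 s_le1 in auto)
    also have "\<dots> \<le> (\<Sum>i<K. e i)" by (rule sum_mono) (use Fupp in \<open>smt (verit)\<close>)
    finally show ?thesis .
  qed
  have A4: "(\<Prod>i<K. 1 - s i) \<le> exp (- (\<Sum>i<K. s i))"
  proof -
    have "(\<Prod>i<K. 1 - s i) \<le> (\<Prod>i<K. exp (- s i))"
      by (rule prod_mono) (use s_le1 exp_ge_add_one_self[of "- s _"] in auto)
    also have "\<dots> = exp (\<Sum>i<K. - s i)" by (simp add: exp_sum)
    also have "\<dots> = exp (- (\<Sum>i<K. s i))" by (simp add: sum_negf)
    finally show ?thesis .
  qed
  have A5: "exp (- (\<Sum>i<K. s i)) \<le> exp (- ((real R - real (K * l)) * p))"
    using sum_s cardUV(1) p0 by (simp add: mult_right_mono)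
  show "jointF N \<xi> V u \<le> exp (- ((real (card V) - real (K * l)) * p))
            + (real (card V) * (\<Sum>d=1..D. \<pi> d) + real (card V) * (real (card V) / real K + 1) * (p\<^sup>2 + \<alpha>))
            + real K * \<alpha>"
    using A1 prodD' A3 A4 A5 sum_e unfolding E_def C_def R_def by linarith
  have B1: "jointF N \<xi> U u - real (K * l) * p \<le> jointF N \<xi> V u"
  proof -
    have sub: "{\<eta>\<in>space N. \<forall>i\<in>U. \<xi> i \<eta> \<le> u} \<subseteq> {\<eta>\<in>space N. \<forall>i\<in>V. \<xi> i \<eta> \<le> u} \<union> (\<Union>b\<in>B. Exc b u)"
      unfolding B_def Exc_def by (auto simp: not_less)
    have "jointF N \<xi> U u \<le> prob ({\<eta>\<in>space N. \<forall>i\<in>V. \<xi> i \<eta> \<le> u} \<union> (\<Union>b\<in>B. Exc b u))"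
      unfolding jointF_def by (rule finite_measure_mono[OF sub]) (use fV fB in auto)
    also have "\<dots> \<le> jointF N \<xi> V u + prob (\<Union>b\<in>B. Exc b u)"
      unfolding jointF_def by (rule measure_Un_le) (use fV fB in auto)
    also have "prob (\<Union>b\<in>B. Exc b u) \<le> real (card B) * p"
      using union_le[OF fB, of u] pa by simp
    also have "real (card B) * p \<le> real (K * l) * p"
    proof (rule mult_right_mono[OF _ p0])
      show "real (card B) \<le> real (K * l)" using cB unfolding B_def U_def by (simp only: of_nat_le_iff)
    qed
    finally show ?thesis by simp
  qed
  have B3: "(\<Prod>i<K. 1 - s i) \<le> (\<Prod>i<K. jointF N \<xi> (G i) u)"
    by (rule prod_mono) (use Flow s_le1 in auto)
  have B4: "exp (- (\<Sum>i<K. s i) - 2 * (\<Sum>i<K. (s i)\<^sup>2)) \<le> (\<Prod>i<K. 1 - s i)"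
  proof -
    have "exp (- (\<Sum>i<K. s i) - 2 * (\<Sum>i<K. (s i)\<^sup>2)) = (\<Prod>i<K. exp (- s i - 2 * (s i)\<^sup>2))"
    proof -
      have "(\<Sum>i<K. - s i - 2 * (s i)\<^sup>2) = - (\<Sum>i<K. s i) - 2 * (\<Sum>i<K. (s i)\<^sup>2)"
        by (simp add: sum_subtractf sum_negf sum_distrib_left)
      then show ?thesis by (metis exp_sum finite_lessThan)
    qed
    also have "\<dots> \<le> (\<Prod>i<K. 1 - s i)"
      by (rule prod_mono) (use s0 s_half exp_le_one_minus in auto)
    finally show ?thesis .
  qed
  have B5: "exp (- (real R * p) - 2 * (C * p) * (real R * p)) \<le> exp (- (\<Sum>i<K. s i) - 2 * (\<Sum>i<K. (s i)\<^sup>2))"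
  proof -
    have sR: "(\<Sum>i<K. s i) \<le> real R * p" using sum_s cardUV(2) p0 by (simp add: mult_right_mono)
    have "(\<Sum>i<K. (s i)\<^sup>2) \<le> (\<Sum>i<K. (C * p) * s i)"
      by (rule sum_mono) (use s0 sC in \<open>auto simp: power2_eq_square intro: mult_right_mono\<close>)
    also have "\<dots> = (C * p) * (\<Sum>i<K. s i)" by (simp add: sum_distrib_left)
    also have "\<dots> \<le> (C * p) * (real R * p)"
      using sR C_def p0 by (intro mult_left_mono) auto
    finally show ?thesis using sR by simp
  qed
  show "exp (- (real (card V) * p) - 2 * ((real (card V) / real K + 1) * p) * (real (card V) * p))
            - (real (card V) * (\<Sum>d=1..D. \<pi> d) + real (card V) * (real (card V) / real K + 1) * (p\<^sup>2 + \<alpha>))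
            - real K * \<alpha> - real (K * l) * p \<le> jointF N \<xi> V u"
  proof -
    have e0: "0 \<le> (\<Sum>i<K. e i)" unfolding e_def by (intro sum_nonneg) auto
    show ?thesis using B1 prodD' B3 B4 B5 sum_e e0 unfolding E_def C_def R_def by linarith
  qed
qed

end

lemma inv_real_seq: "(\<lambda>n. 1 / real n) \<longlonglongrightarrow> 0"
  using lim_inverse_n' by simp

lemma extreme_limit:
  fixes N :: "'b measure" and \<xi> :: "int \<Rightarrow> 'b \<Rightarrow> real" and u :: "nat \<Rightarrow> real"
    and V :: "nat \<Rightarrow> int set" and r \<tau> :: real
  assumes N: "prob_space N" and xm: "\<And>k. \<xi> k \<in> borel_measurable N"
    and stat: "stationary_seq N \<xi>"
    and tail: "(\<lambda>n. real n * measure N {\<eta> \<in> space N. \<xi> 0 \<eta> > u n}) \<longlonglongrightarrow> \<tau>"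
    and DD: "condD N \<xi> u a l" and DD': "condD' N \<xi> u a l"
    and fV: "\<And>n. finite (V n)" and cV: "\<And>n. card (V n) \<le> n"
    and rV: "(\<lambda>n. real (card (V n)) / real n) \<longlonglongrightarrow> r"
  shows "(\<lambda>n. jointF N \<xi> (V n) (u n)) \<longlonglongrightarrow> exp (- \<tau> * r)"
proof -
  interpret scen N \<xi> by (rule scen.intro[OF N], rule scen_axioms.intro, rule xm)
  obtain k :: "nat \<Rightarrow> nat" where kinf: "filterlim k at_top sequentially"
    and ep2: "(\<lambda>n. real n ^ 2 / real (k n) * a n (l n)) \<longlonglongrightarrow> 0"
    and kl: "(\<lambda>n. real (k n * l n) / real n) \<longlonglongrightarrow> 0"
    and ep1: "(\<lambda>n. real n * (\<Sum>j=1..n div k n.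
             measure N {\<eta> \<in> space N. \<xi> 0 \<eta> > u n \<and> \<xi> (int j) \<eta> > u n})) \<longlonglongrightarrow> 0"
    using DD' unfolding condD'_def by blast
  have Dall: "\<And>n m I J. finite I \<Longrightarrow> finite J \<Longrightarrow> I \<noteq> {} \<Longrightarrow> J \<noteq> {} \<Longrightarrow>
        (\<forall>i\<in>I. \<forall>j\<in>J. i + int m \<le> j) \<Longrightarrow>
        \<bar>jointF N \<xi> (I \<union> J) (u n) - jointF N \<xi> I (u n) * jointF N \<xi> J (u n)\<bar> \<le> a n m"
    using DD unfolding condD_def by blast
  define p where "p n = prob (Exc 0 (u n))" for n
  define \<alpha> where "\<alpha> n = a n (l n)" for n
  define \<pi> where "\<pi> n d = prob (Exc 0 (u n) \<inter> Exc (int d) (u n))" for n d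
  define R where "R n = real (card (V n))" for n
  define K where "K n = real (k n)" for n
  have a0: "0 \<le> \<alpha> n" for n
  proof -
    have "\<bar>jointF N \<xi> ({0} \<union> {int (l n)}) (u n) - jointF N \<xi> {0} (u n) * jointF N \<xi> {int (l n)} (u n)\<bar> \<le> a n (l n)"
      by (rule Dall) auto
    then show ?thesis unfolding \<alpha>_def by linarith
  qed
  have p0: "0 \<le> p n" for n unfolding p_def by simp
  have np: "(\<lambda>n. real n * p n) \<longlonglongrightarrow> \<tau>" using tail unfolding p_def Exc_def .
  have ep1': "(\<lambda>n. real n * (\<Sum>d=1..n div k n. \<pi> n d)) \<longlonglongrightarrow> 0"
  proof -
    have pieq: "\<pi> n d = measure N {\<eta> \<in> space N. \<xi> 0 \<eta> > u n \<and> \<xi> (int d) \<eta> > u n}" for n d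
      unfolding \<pi>_def Exc_def by (rule arg_cong[where f="measure N"]) auto
    show ?thesis using ep1 by (simp only: pieq)
  qed
  have R0: "0 \<le> R n" for n unfolding R_def by simp
  have Rn: "R n \<le> real n" for n unfolding R_def using cV by simp
  have \<pi>0: "0 \<le> \<pi> n d" for n d unfolding \<pi>_def by simp
  have Kinf: "filterlim K at_top sequentially"
    unfolding K_def by (rule filterlim_compose[OF filterlim_real_sequentially kinf])
  have ik: "(\<lambda>n. 1 / K n) \<longlonglongrightarrow> 0"
    using tendsto_inverse_0_at_top[OF Kinf] by (simp add: divide_inverse)
  have pto0: "p \<longlonglongrightarrow> 0"
  proof -
    have "(\<lambda>n. (real n * p n) * (1 / real n)) \<longlonglongrightarrow> 0"
      using tendsto_mult[OF np inv_real_seq] by simp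
    moreover have "eventually (\<lambda>n. (real n * p n) * (1 / real n) = p n) sequentially"
      using eventually_gt_at_top[of 0] by eventually_elim simp
    ultimately show ?thesis by (rule Lim_transform_eventually)
  qed
  have Rp: "(\<lambda>n. R n * p n) \<longlonglongrightarrow> r * \<tau>"
  proof -
    have "(\<lambda>n. (R n / real n) * (real n * p n)) \<longlonglongrightarrow> r * \<tau>"
      using rV np unfolding R_def by (intro tendsto_mult) auto
    moreover have "eventually (\<lambda>n. (R n / real n) * (real n * p n) = R n * p n) sequentially"
      using eventually_gt_at_top[of 0] by eventually_elim simp
    ultimately show ?thesis by (rule Lim_transform_eventually)
  qed
  have Klp: "(\<lambda>n. real (k n * l n) * p n) \<longlonglongrightarrow> 0"
  proof -
    have "(\<lambda>n. (real (k n * l n) / real n) * (real n * p n)) \<longlonglongrightarrow> 0"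
      using tendsto_mult[OF kl np] by simp
    moreover have "eventually (\<lambda>n. (real (k n * l n) / real n) * (real n * p n) = real (k n * l n) * p n) sequentially"
      using eventually_gt_at_top[of 0] by eventually_elim simp
    ultimately show ?thesis by (rule Lim_transform_eventually)
  qed
  define cp where "cp n = (real n / K n + 1) * p n" for n
  have cp0: "cp \<longlonglongrightarrow> 0"
  proof -
    have "(\<lambda>n. (real n * p n) * (1 / K n) + p n) \<longlonglongrightarrow> \<tau> * 0 + 0"
      by (intro tendsto_intros np ik pto0)
    moreover have "(\<lambda>n. (real n * p n) * (1 / K n) + p n) = cp"
      unfolding cp_def by (auto simp: field_simps)
    ultimately show ?thesis by simp
  qed
  define err where "err n = real n * (\<Sum>d=1..n div k n. \<pi> n d)
      + real n * (real n / K n + 1) * ((p n)\<^sup>2 + \<alpha> n) + K n * \<alpha> n" for n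
  have ev_k: "eventually (\<lambda>n. 0 < k n) sequentially"
  proof -
    have "eventually (\<lambda>n. 1 \<le> k n) sequentially" using kinf unfolding filterlim_at_top by blast
    then show ?thesis by (rule eventually_mono) simp
  qed
  have ev_kl: "eventually (\<lambda>n. k n * l n \<le> n) sequentially"
  proof -
    have "eventually (\<lambda>n. real (k n * l n) / real n < 1) sequentially"
      using order_tendstoD(2)[OF kl, of 1] by simp
    then show ?thesis using eventually_gt_at_top[of 0]
    proof eventually_elim
      case (elim n)
      then have "real (k n * l n) < real n" by (simp add: divide_less_eq del: of_nat_mult)
      then show ?case by (simp only: of_nat_less_iff)
    qed
  qed
  have ev_small: "eventually (\<lambda>n. cp n \<le> 1/2) sequentially"
    using order_tendstoD(2)[OF cp0, of "1/2"] by (auto elim: eventually_mono)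
  have ev_Kn: "eventually (\<lambda>n. K n \<le> real n) sequentially"
    using ev_kl ev_k
  proof eventually_elim
    case (elim n)
    have lpos: "0 < l n" using DD unfolding condD_def by blast
    have "k n * 1 \<le> k n * l n" using lpos by (intro mult_le_mono2) simp
    then have "k n \<le> n" using elim(1) by linarith
    then show ?case unfolding K_def by simp
  qed
  have err0: "err \<longlonglongrightarrow> 0"
  proof -
    define t1 where "t1 n = real n * (real n / K n + 1) * (p n)\<^sup>2" for n
    define t2 where "t2 n = real n * (real n / K n + 1) * \<alpha> n + K n * \<alpha> n" for n
    have "err = (\<lambda>n. real n * (\<Sum>d=1..n div k n. \<pi> n d) + t1 n + t2 n)"
      unfolding err_def t1_def t2_def by (auto simp: algebra_simps fun_eq_iff)
    moreover have "t1 \<longlonglongrightarrow> 0"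
    proof -
      have "(\<lambda>n. (real n * p n)^2 * (1 / K n) + (real n * p n) * p n) \<longlonglongrightarrow> \<tau>^2 * 0 + \<tau> * 0"
        by (intro tendsto_intros np ik pto0)
      moreover have "(\<lambda>n. (real n * p n)^2 * (1 / K n) + (real n * p n) * p n) = t1"
        unfolding t1_def by (auto simp: fun_eq_iff field_simps power2_eq_square)
      ultimately show ?thesis by simp
    qed
    moreover have "t2 \<longlonglongrightarrow> 0"
    proof (rule tendsto_sandwich[of "\<lambda>n. 0" _ _ "\<lambda>n. 3 * (real n ^ 2 / real (k n) * a n (l n))"])
      show "eventually (\<lambda>n. 0 \<le> t2 n) sequentially"
        unfolding t2_def K_def using a0 by (auto intro!: always_eventually add_nonneg_nonneg mult_nonneg_nonneg)
      show "eventually (\<lambda>n. t2 n \<le> 3 * (real n ^ 2 / real (k n) * a n (l n))) sequentially"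
        using ev_Kn ev_k
      proof eventually_elim
        case (elim n)
        have Kp: "0 < K n" using elim(2) unfolding K_def by simp
        have A: "real n * (real n / K n + 1) * \<alpha> n = real n ^ 2 / K n * \<alpha> n + real n * \<alpha> n"
          using Kp by (simp add: field_simps power2_eq_square)
        have B: "real n * \<alpha> n \<le> real n ^ 2 / K n * \<alpha> n"
        proof (rule mult_right_mono[OF _ a0])
          show "real n \<le> real n ^ 2 / K n" using Kp elim(1) by (simp add: field_simps power2_eq_square mult_left_mono)
        qed
        have C: "K n * \<alpha> n \<le> real n ^ 2 / K n * \<alpha> n"
        proof (rule mult_right_mono[OF _ a0])
          have "K n * K n \<le> real n * real n" using elim(1) Kp by (intro mult_mono) auto
          then show "K n \<le> real n ^ 2 / K n" using Kp by (simp add: field_simps power2_eq_square)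
        qed
        show ?case unfolding t2_def A using B C unfolding \<alpha>_def K_def by linarith
      qed
      show "(\<lambda>n. 0) \<longlonglongrightarrow> 0" by simp
      show "(\<lambda>n. 3 * (real n ^ 2 / real (k n) * a n (l n))) \<longlonglongrightarrow> 0"
        using tendsto_mult[OF tendsto_const ep2, of 3] by simp
    qed
    ultimately show ?thesis using ep1' by (simp add: tendsto_add_zero)
  qed
  define up where "up n = exp (- (R n * p n - real (k n * l n) * p n)) + err n" for n
  define lo where "lo n = exp (- (R n * p n) - 2 * cp n * (R n * p n)) - err n - real (k n * l n) * p n" for n
  have ev_bounds: "eventually (\<lambda>n. lo n \<le> jointF N \<xi> (V n) (u n) \<and> jointF N \<xi> (V n) (u n) \<le> up n) sequentially"
    using ev_k ev_kl ev_small
  proof eventually_elim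
    case (elim n)
    have Kp: "0 < K n" using elim(1) unfolding K_def by simp
    have lD: "l n \<le> n div k n + 1"
    proof -
      have "l n \<le> n div k n" using elim(1,2) by (simp add: less_eq_div_iff_mult_less_eq mult.commute)
      then show ?thesis by simp
    qed
    have small: "(real (card (V n)) / real (k n) + 1) * p n \<le> 1/2"
    proof -
      have "(real (card (V n)) / real (k n) + 1) * p n \<le> cp n"
        unfolding cp_def K_def using Rn[of n] p0[of n] Kp unfolding R_def K_def
        by (intro mult_right_mono) (auto simp: divide_right_mono)
      then show ?thesis using elim(3) by linarith
    qed
    note pn = per_n[OF stat fV[of n] elim(1) Dall[of _ _ "l n" n] a0[of n, unfolded \<alpha>_def] lD p_def[of n] \<pi>_def[of n] small]
    have E_le: "real (card (V n)) * (\<Sum>d=1..n div k n. \<pi> n d) + real (card (V n)) * (real (card (V n)) / real (k n) + 1) * ((p n)\<^sup>2 + a n (l n))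
         \<le> err n - K n * \<alpha> n"
    proof -
      have s0: "0 \<le> (\<Sum>d=1..n div k n. \<pi> n d)" using \<pi>0 by (simp add: sum_nonneg)
      have q0: "0 \<le> (p n)\<^sup>2 + \<alpha> n" using a0[of n] by simp
      have "real (card (V n)) * (\<Sum>d=1..n div k n. \<pi> n d) \<le> real n * (\<Sum>d=1..n div k n. \<pi> n d)"
        using Rn[of n] s0 unfolding R_def by (intro mult_right_mono) auto
      moreover have "real (card (V n)) * (real (card (V n)) / real (k n) + 1) * ((p n)\<^sup>2 + \<alpha> n)
          \<le> real n * (real n / K n + 1) * ((p n)\<^sup>2 + \<alpha> n)"
        using Rn[of n] q0 Kp unfolding R_def K_def
        by (intro mult_right_mono mult_mono add_right_mono divide_right_mono) auto
      ultimately show ?thesis unfolding err_def \<alpha>_def by linarith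
    qed
    have up_ok: "jointF N \<xi> (V n) (u n) \<le> up n"
    proof -
      have "- ((real (card (V n)) - real (k n * l n)) * p n) = - (R n * p n - real (k n * l n) * p n)"
        unfolding R_def by (simp add: algebra_simps)
      then have ee: "exp (- ((real (card (V n)) - real (k n * l n)) * p n)) = exp (- (R n * p n - real (k n * l n) * p n))"
        by (simp only:)
      show ?thesis using pn(1) E_le unfolding up_def \<alpha>_def K_def ee by linarith
    qed
    have lo_ok: "lo n \<le> jointF N \<xi> (V n) (u n)"
    proof -
      have "exp (- (R n * p n) - 2 * cp n * (R n * p n)) \<le>
            exp (- (real (card (V n)) * p n) - 2 * ((real (card (V n)) / real (k n) + 1) * p n) * (real (card (V n)) * p n))"
      proof -
        have "(real (card (V n)) / real (k n) + 1) * p n \<le> cp n"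
          unfolding cp_def using Rn[of n] p0[of n] Kp unfolding R_def K_def
          by (intro mult_right_mono) (auto simp: divide_right_mono)
        then have "2 * ((real (card (V n)) / real (k n) + 1) * p n) * (R n * p n) \<le> 2 * cp n * (R n * p n)"
          using R0[of n] p0[of n] by (intro mult_right_mono) auto
        then show ?thesis unfolding R_def by simp
      qed
      then show ?thesis using pn(2) E_le unfolding lo_def \<alpha>_def K_def by linarith
    qed
    show ?case using up_ok lo_ok by simp
  qed
  have up_lim: "up \<longlonglongrightarrow> exp (- \<tau> * r)"
  proof -
    have "up \<longlonglongrightarrow> exp (- (r * \<tau> - 0)) + 0"
      unfolding up_def by (intro tendsto_intros Rp Klp err0)
    then show ?thesis by (simp add: mult.commute)
  qed
  have lo_lim: "lo \<longlonglongrightarrow> exp (- \<tau> * r)"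
  proof -
    have "lo \<longlonglongrightarrow> exp (- (r * \<tau>) - 2 * 0 * (r * \<tau>)) - 0 - 0"
      unfolding lo_def by (intro tendsto_intros Rp Klp err0 cp0)
    then show ?thesis by (simp add: mult.commute)
  qed
  show ?thesis
    by (rule tendsto_sandwich[OF _ _ lo_lim up_lim]) (use ev_bounds in \<open>auto elim: eventually_mono\<close>)
qed

definition PS :: "(nat \<Rightarrow> int) measure" where "PS = Pi\<^sub>M UNIV (\<lambda>_. count_space UNIV)"
definition sh :: "nat \<Rightarrow> (nat \<Rightarrow> int) \<Rightarrow> nat \<Rightarrow> int" where "sh n f = (\<lambda>i. f (n + i))"

lemma space_PS: "space PS = UNIV" unfolding PS_def by (simp add: space_PiM PiE_UNIV_domain)

lemma comp_meas[measurable]: "(\<lambda>f. f i) \<in> PS \<rightarrow>\<^sub>M count_space UNIV"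
  unfolding PS_def by (rule measurable_component_singleton) simp

lemma comp_real_meas[measurable]: "(\<lambda>f. real_of_int (f i)) \<in> borel_measurable PS"
  by (rule measurable_compose[OF comp_meas]) simp

lemma sh_meas[measurable]: "sh n \<in> PS \<rightarrow>\<^sub>M PS"
  unfolding sh_def PS_def
  by (rule measurable_PiM_single') (auto intro: measurable_component_singleton)

lemma sh_0[simp]: "sh 0 f = f" unfolding sh_def by simp
lemma sh_sh[simp]: "sh m (sh n f) = sh (n + m) f" unfolding sh_def by (simp add: add.assoc)

definition Sg :: "((nat \<Rightarrow> int) \<Rightarrow> real) \<Rightarrow> nat \<Rightarrow> (nat \<Rightarrow> int) \<Rightarrow> real" where
  "Sg g n f = (\<Sum>k<n. g (sh k f))"

definition io :: "((nat \<Rightarrow> int) \<Rightarrow> real) \<Rightarrow> real \<Rightarrow> (nat \<Rightarrow> int) \<Rightarrow> bool" where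
  "io g s f \<longleftrightarrow> (\<forall>M. \<exists>n\<ge>M. 0 < n \<and> Sg g n f < s * real n)"

definition Bs :: "((nat \<Rightarrow> int) \<Rightarrow> real) \<Rightarrow> real \<Rightarrow> (nat \<Rightarrow> int) set" where
  "Bs g t = {f. \<exists>j::nat. io g (t - 1 / real (Suc j)) f}"

lemma Sg_meas[measurable]: "g \<in> borel_measurable PS \<Longrightarrow> Sg g n \<in> borel_measurable PS"
  unfolding Sg_def by (intro borel_measurable_sum) (rule measurable_compose[OF sh_meas], assumption)

lemma io_sets[measurable]: "g \<in> borel_measurable PS \<Longrightarrow> {f. io g s f} \<in> sets PS"
proof -
  assume [measurable]: "g \<in> borel_measurable PS"
  have "{f. io g s f} = {f\<in>space PS. \<forall>M. \<exists>n\<ge>M. 0 < n \<and> Sg g n f < s * real n}"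
    unfolding io_def space_PS by simp
  also have "\<dots> \<in> sets PS" by measurable
  finally show ?thesis .
qed

lemma Bs_sets[measurable]: "g \<in> borel_measurable PS \<Longrightarrow> Bs g t \<in> sets PS"
proof -
  assume [measurable]: "g \<in> borel_measurable PS"
  have "Bs g t = (\<Union>j. {f. io g (t - 1 / real (Suc j)) f})" unfolding Bs_def by auto
  also have "\<dots> \<in> sets PS" by measurable
  finally show ?thesis .
qed

lemma Sg_Suc: "Sg g (Suc n) f = g f + Sg g n (sh 1 f)"
  unfolding Sg_def by (simp only: sum.lessThan_Suc_shift sh_sh sh_0 plus_1_eq_Suc)

lemma Sg_bounds:
  assumes "\<And>f. 0 \<le> g f \<and> g f \<le> 1"
  shows "0 \<le> Sg g n f" "Sg g n f \<le> real n"
proof -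
  show "0 \<le> Sg g n f" unfolding Sg_def using assms by (simp add: sum_nonneg)
  have "Sg g n f \<le> (\<Sum>k<n. 1)" unfolding Sg_def using assms by (intro sum_mono) auto
  then show "Sg g n f \<le> real n" by simp
qed

lemma io_mono: "io g s f \<Longrightarrow> s \<le> s' \<Longrightarrow> io g s' f"
  unfolding io_def by (meson less_le_trans mult_right_mono of_nat_0_le_iff)

lemma io_I1:
  assumes g01: "\<And>f. 0 \<le> g f \<and> g f \<le> 1" and io: "io g s (sh 1 f)" and ss: "s < s'"
  shows "io g s' f"
  unfolding io_def
proof
  fix M
  obtain N0 :: nat where N0: "1 - s' < real N0 * (s' - s)"
    using ex_less_of_nat_mult[of "s' - s" "1 - s'"] ss by auto
  obtain n where n: "n \<ge> max M N0" "0 < n" "Sg g n (sh 1 f) < s * real n"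
    using io unfolding io_def by blast
  have "Sg g (Suc n) f = g f + Sg g n (sh 1 f)" by (rule Sg_Suc)
  also have "\<dots> < 1 + s * real n" using n(3) g01[of f] by linarith
  also have "\<dots> \<le> s' * real (Suc n)"
  proof -
    have "real N0 * (s' - s) \<le> real n * (s' - s)" using n(1) ss by (intro mult_right_mono) auto
    then show ?thesis using N0 by (simp add: algebra_simps)
  qed
  finally show "\<exists>n\<ge>M. 0 < n \<and> Sg g n f < s' * real n" using n(1) by (intro exI[of _ "Suc n"]) auto
qed

lemma io_I2:
  assumes g01: "\<And>f. 0 \<le> g f \<and> g f \<le> 1" and io: "io g s f" and ss: "s < s'"
  shows "io g s' (sh 1 f)"
  unfolding io_def
proof
  fix M
  obtain N0 :: nat where N0: "s < real N0 * (s' - s)"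
    using ex_less_of_nat_mult[of "s' - s" "s"] ss by auto
  obtain m where m: "m \<ge> max (M + 2) (N0 + 2)" "0 < m" "Sg g m f < s * real m"
    using io unfolding io_def by blast
  obtain n where mn: "m = Suc n" using m(2) gr0_implies_Suc by blast
  have "Sg g n (sh 1 f) = Sg g (Suc n) f - g f" using Sg_Suc[of g n f] by simp
  also have "\<dots> \<le> Sg g (Suc n) f" using g01[of f] by simp
  also have "\<dots> < s * real (Suc n)" using m(3) mn by simp
  also have "\<dots> \<le> s' * real n"
  proof -
    have "real N0 * (s' - s) \<le> real n * (s' - s)" using m(1) mn ss by (intro mult_right_mono) auto
    then show ?thesis using N0 by (simp add: algebra_simps)
  qed
  finally show "\<exists>n\<ge>M. 0 < n \<and> Sg g n (sh 1 f) < s' * real n"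
    using m(1) mn by (intro exI[of _ n]) auto
qed

lemma Bs_inv1:
  assumes g01: "\<And>f. 0 \<le> g f \<and> g f \<le> 1"
  shows "sh 1 f \<in> Bs g t \<longleftrightarrow> f \<in> Bs g t"
proof
  have lt: "t - 1 / real (Suc j) < t - 1 / real (Suc (2 * j + 1))" for j :: nat
    by (simp add: frac_less2)
  show "sh 1 f \<in> Bs g t \<Longrightarrow> f \<in> Bs g t"
  proof -
    assume "sh 1 f \<in> Bs g t"
    then obtain j where "io g (t - 1 / real (Suc j)) (sh 1 f)" unfolding Bs_def by blast
    then have "io g (t - 1 / real (Suc (2 * j + 1))) f" using io_I1[where g=g, OF g01 _ lt] by blast
    then show "f \<in> Bs g t" unfolding Bs_def by blast
  qed
  show "f \<in> Bs g t \<Longrightarrow> sh 1 f \<in> Bs g t"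
  proof -
    assume "f \<in> Bs g t"
    then obtain j where "io g (t - 1 / real (Suc j)) f" unfolding Bs_def by blast
    then have "io g (t - 1 / real (Suc (2 * j + 1))) (sh 1 f)" using io_I2[where g=g, OF g01 _ lt] by blast
    then show "sh 1 f \<in> Bs g t" unfolding Bs_def by blast
  qed
qed

lemma Bs_inv:
  assumes g01: "\<And>f. 0 \<le> g f \<and> g f \<le> 1"
  shows "sh m -` Bs g t = Bs g t"
proof (induction m)
  case 0 then show ?case by (simp add: vimage_def)
next
  case (Suc m)
  have "f \<in> sh (Suc m) -` Bs g t \<longleftrightarrow> f \<in> Bs g t" for f
  proof -
    have "sh (Suc m) f = sh 1 (sh m f)" by simp
    then have "f \<in> sh (Suc m) -` Bs g t \<longleftrightarrow> sh m f \<in> Bs g t" using Bs_inv1[where g=g and f="sh m f" and t=t, OF g01] by simp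
    also have "\<dots> \<longleftrightarrow> f \<in> Bs g t" using Suc.IH by blast
    finally show ?thesis .
  qed
  then show ?case by blast
qed

lemma cover:
  fixes z \<beta> :: "nat \<Rightarrow> real" and t :: real and N :: nat
  assumes z01: "\<And>k. 0 \<le> z k \<and> z k \<le> 1" and t0: "0 \<le> t"
    and b0: "\<And>k. 0 \<le> \<beta> k"
    and good: "\<And>k. \<beta> k < 1 \<Longrightarrow> \<exists>n\<in>{1..N}. (\<Sum>i\<in>{k..<k+n}. z i) < t * real n"
  shows "(\<Sum>k\<in>{a..<a+L}. z k) \<le> t * real L + (\<Sum>k\<in>{a..<a+L}. \<beta> k) + real N"
proof (induction L arbitrary: a rule: less_induct)
  case (less L)
  show ?case
  proof (cases "L = 0")
    case True then show ?thesis by simp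
  next
    case L0: False
    show ?thesis
    proof (cases "\<beta> a < 1")
      case False
      obtain L' where LL: "L = Suc L'" using L0 not0_implies_Suc by blast
      have IH: "(\<Sum>k\<in>{Suc a..<Suc a+L'}. z k) \<le> t * real L' + (\<Sum>k\<in>{Suc a..<Suc a+L'}. \<beta> k) + real N"
        using less.IH[of L' "Suc a"] LL by simp
      have s1: "(\<Sum>k\<in>{a..<a+L}. z k) = z a + (\<Sum>k\<in>{Suc a..<Suc a+L'}. z k)"
        unfolding LL by (simp add: sum.atLeast_Suc_lessThan)
      have s2: "(\<Sum>k\<in>{a..<a+L}. \<beta> k) = \<beta> a + (\<Sum>k\<in>{Suc a..<Suc a+L'}. \<beta> k)"
        unfolding LL by (simp add: sum.atLeast_Suc_lessThan)
      have "z a \<le> \<beta> a" using False z01[of a] by linarith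
      moreover have "t * real L' \<le> t * real L" using t0 LL by (intro mult_left_mono) auto
      ultimately show ?thesis unfolding s1 s2 using IH by linarith
    next
      case True
      obtain n where n: "n \<in> {1..N}" "(\<Sum>i\<in>{a..<a+n}. z i) < t * real n" using good[OF True] by blast
      show ?thesis
      proof (cases "n \<le> L")
        case True
        have IH: "(\<Sum>k\<in>{a+n..<(a+n)+(L-n)}. z k) \<le> t * real (L-n) + (\<Sum>k\<in>{a+n..<(a+n)+(L-n)}. \<beta> k) + real N"
          using less.IH[of "L - n" "a + n"] n(1) L0 True by auto
        have e: "(a+n)+(L-n) = a + L" using True by simp
        have s1: "(\<Sum>k\<in>{a..<a+L}. z k) = (\<Sum>k\<in>{a..<a+n}. z k) + (\<Sum>k\<in>{a+n..<a+L}. z k)"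
          using True by (simp add: sum.atLeastLessThan_concat)
        have s2: "(\<Sum>k\<in>{a..<a+L}. \<beta> k) = (\<Sum>k\<in>{a..<a+n}. \<beta> k) + (\<Sum>k\<in>{a+n..<a+L}. \<beta> k)"
          using True by (simp add: sum.atLeastLessThan_concat)
        have b1: "0 \<le> (\<Sum>k\<in>{a..<a+n}. \<beta> k)" using b0 by (simp add: sum_nonneg)
        have tt: "t * real n + t * real (L - n) = t * real L" using True by (simp add: algebra_simps of_nat_diff)
        show ?thesis unfolding s1 s2 using IH[unfolded e] n(2) b1 tt by linarith
      next
        case False
        have "(\<Sum>k\<in>{a..<a+L}. z k) \<le> (\<Sum>k\<in>{a..<a+L}. 1)" using z01 by (intro sum_mono) auto
        also have "\<dots> = real L" by simp
        also have "\<dots> \<le> real N" using False n(1) by simp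
        finally have "(\<Sum>k\<in>{a..<a+L}. z k) \<le> real N" .
        moreover have "0 \<le> t * real L" using t0 by simp
        moreover have "0 \<le> (\<Sum>k\<in>{a..<a+L}. \<beta> k)" using b0 by (simp add: sum_nonneg)
        ultimately show ?thesis by linarith
      qed
    qed
  qed
qed

lemma sum_shift_ivl:
  fixes h :: "nat \<Rightarrow> 'a::comm_monoid_add"
  shows "(\<Sum>i\<in>{k..<k+n}. h i) = (\<Sum>j<n. h (k + j))"
proof (induction n)
  case 0 then show ?case by simp
next
  case (Suc n) then show ?case by (simp add: add.commute)
qed

locale erg = prob_space P for P :: "(nat \<Rightarrow> int) measure" +
  assumes sets_P: "sets P = sets PS"
    and stat: "\<And>n. distr P PS (sh n) = P"
    and ergo: "\<And>E. E \<in> sets PS \<Longrightarrow> (\<And>m. sh m -` E = E) \<Longrightarrow> prob E = 0 \<or> prob E = 1"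
begin

lemma space_P: "space P = UNIV" using sets_eq_imp_space_eq[OF sets_P] space_PS by simp
lemma meas_P: "f \<in> PS \<rightarrow>\<^sub>M M' \<Longrightarrow> f \<in> P \<rightarrow>\<^sub>M M'" by (simp add: measurable_cong_sets[OF sets_P refl])
lemma sets_PI: "A \<in> sets PS \<Longrightarrow> A \<in> events" using sets_P by simp

lemma int_shift:
  fixes g :: "(nat \<Rightarrow> int) \<Rightarrow> real"
  assumes g: "g \<in> borel_measurable PS"
  shows "(\<integral>f. g (sh n f) \<partial>P) = (\<integral>f. g f \<partial>P)"
proof -
  have "(\<integral>f. g f \<partial>(distr P PS (sh n))) = (\<integral>f. g (sh n f) \<partial>P)"
    by (rule integral_distr[OF meas_P[OF sh_meas] g])
  then show ?thesis using stat[of n] by simp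
qed

lemma bounded_int:
  fixes g :: "(nat \<Rightarrow> int) \<Rightarrow> real" and B :: real
  assumes g: "g \<in> borel_measurable PS" and b: "\<And>f. \<bar>g f\<bar> \<le> B"
  shows "integrable P g"
  by (rule integrable_const_bound[where B=B]) (use b meas_P[OF g] in auto)

lemma KW:
  assumes gm: "g \<in> borel_measurable PS" and g01: "\<And>f. 0 \<le> g f \<and> g f \<le> 1"
    and t: "t < (\<integral>f. g f \<partial>P)"
  shows "prob (Bs g t) = 0"
proof (rule ccontr)
  assume ne: "prob (Bs g t) \<noteq> 0"
  have p1: "prob (Bs g t) = 1"
    using ergo[OF Bs_sets[OF gm] Bs_inv[where g=g, OF g01]] ne by blast
  have tpos: "0 < t"
  proof (rule ccontr)
    assume nt: "\<not> 0 < t"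
    have "Bs g t = {}"
    proof (rule ccontr)
      assume "Bs g t \<noteq> {}"
      then obtain f j where "io g (t - 1 / real (Suc j)) f" unfolding Bs_def by blast
      then obtain n where n: "0 < n" "Sg g n f < (t - 1 / real (Suc j)) * real n" unfolding io_def by blast
      have "t - 1 / real (Suc j) \<le> 0" using nt by (smt (verit) of_nat_0_less_iff divide_pos_pos zero_less_Suc)
      then have "(t - 1 / real (Suc j)) * real n \<le> 0" by (intro mult_nonpos_nonneg) auto
      then show False using n(2) Sg_bounds(1)[where g=g, OF g01, of n f] by linarith
    qed
    then show False using p1 by simp
  qed
  define c where "c = (\<integral>f. g f \<partial>P)"
  define \<delta> where "\<delta> = (c - t) / 3"
  have \<delta>0: "0 < \<delta>" using t unfolding \<delta>_def c_def by simp
  define Good where "Good N = {f. \<exists>n\<in>{1..N}. Sg g n f < t * real n}" for N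
  have Good_sets: "Good N \<in> sets PS" for N
  proof -
    have "Good N = {f \<in> space PS. \<exists>n\<in>{1..N}. Sg g n f < t * real n}" unfolding Good_def space_PS by simp
    also have "\<dots> \<in> sets PS" using gm by measurable
    finally show ?thesis .
  qed
  have inc: "incseq Good"
  proof (rule incseq_SucI)
    fix N show "Good N \<subseteq> Good (Suc N)" unfolding Good_def by force
  qed
  have BsG: "Bs g t \<subseteq> (\<Union>N. Good N)"
  proof
    fix f assume "f \<in> Bs g t"
    then obtain j where "io g (t - 1 / real (Suc j)) f" unfolding Bs_def by blast
    then obtain n where n: "n \<ge> 1" "0 < n" "Sg g n f < (t - 1 / real (Suc j)) * real n"
      unfolding io_def by blast
    have "(t - 1 / real (Suc j)) * real n \<le> t * real n" using n(2) by (intro mult_right_mono) auto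
    then have "Sg g n f < t * real n" using n(3) by linarith
    then have "f \<in> Good n" unfolding Good_def using n(1) by auto
    then show "f \<in> (\<Union>N. Good N)" by blast
  qed
  have lim: "(\<lambda>N. prob (Good N)) \<longlonglongrightarrow> prob (\<Union>N. Good N)"
    by (rule finite_Lim_measure_incseq) (use Good_sets sets_P inc in auto)
  have pU: "prob (\<Union>N. Good N) = 1"
  proof -
    have "prob (Bs g t) \<le> prob (\<Union>N. Good N)"
      by (rule finite_measure_mono[OF BsG]) (use Good_sets sets_P in auto)
    then show ?thesis using p1 prob_le_1 by (metis antisym)
  qed
  obtain N where pG: "prob (Good N) > 1 - \<delta>"
  proof -
    have "eventually (\<lambda>N. prob (Good N) > 1 - \<delta>) sequentially"
      using order_tendstoD(1)[OF lim] pU \<delta>0 by simp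
    then show ?thesis using that by (auto simp: eventually_sequentially)
  qed
  define Bad where "Bad = UNIV - Good N"
  have Bad_sets: "Bad \<in> sets PS" unfolding Bad_def using Good_sets[of N] space_PS
    by (metis sets.compl_sets)
  have pBad: "prob Bad < \<delta>"
  proof -
    have "prob Bad = 1 - prob (Good N)" unfolding Bad_def
      using prob_compl[OF sets_PI[OF Good_sets[of N]]] space_P by simp
    then show ?thesis using pG by simp
  qed
  obtain L :: nat where L: "real N < real L * \<delta>"
    using ex_less_of_nat_mult[OF \<delta>0] by blast
  have pw: "(\<Sum>k<L. g (sh k f)) \<le> t * real L + (\<Sum>k<L. indicator Bad (sh k f)) + real N" for f
  proof -
    have "(\<Sum>k\<in>{0..<0+L}. g (sh k f)) \<le> t * real L + (\<Sum>k\<in>{0..<0+L}. indicator Bad (sh k f)) + real N"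
    proof (rule cover[where z="\<lambda>k. g (sh k f)" and \<beta>="\<lambda>k. indicator Bad (sh k f)"])
      show "\<And>k. 0 \<le> g (sh k f) \<and> g (sh k f) \<le> 1" using g01 by blast
      show "0 \<le> t" using tpos by simp
      show "\<And>k. 0 \<le> (indicator Bad (sh k f) :: real)" by simp
      fix k assume "(indicator Bad (sh k f) :: real) < 1"
      then have "sh k f \<in> Good N" unfolding Bad_def by (auto simp: indicator_def split: if_splits)
      then obtain n where n: "n \<in> {1..N}" "Sg g n (sh k f) < t * real n" unfolding Good_def by blast
      have "(\<Sum>i\<in>{k..<k+n}. g (sh i f)) = Sg g n (sh k f)"
        unfolding sum_shift_ivl Sg_def by (simp add: add.commute)
      then show "\<exists>n\<in>{1..N}. (\<Sum>i\<in>{k..<k+n}. g (sh i f)) < t * real n" using n by (intro bexI[of _ n]) auto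
    qed
    then show ?thesis by (simp add: atLeast0LessThan)
  qed
  have gsh_m: "(\<lambda>f. g (sh k f)) \<in> borel_measurable PS" for k
    by (rule measurable_compose[OF sh_meas gm])
  have ind_m: "(\<lambda>f. indicator Bad (sh k f) :: real) \<in> borel_measurable PS" for k
    by (rule measurable_compose[OF sh_meas]) (use Bad_sets in measurable)
  have int_g: "integrable P (\<lambda>f. g (sh k f))" for k
    by (rule bounded_int[OF gsh_m, where B=1]) (use g01 in \<open>auto simp: abs_le_iff\<close>)
  have int_i: "integrable P (\<lambda>f. indicator Bad (sh k f) :: real)" for k
    by (rule bounded_int[OF ind_m, where B=1]) auto
  have "(\<integral>f. (\<Sum>k<L. g (sh k f)) \<partial>P) \<le> (\<integral>f. t * real L + (\<Sum>k<L. indicator Bad (sh k f)) + real N \<partial>P)"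
    by (rule integral_mono) (use pw int_g int_i in auto)
  moreover have "(\<integral>f. (\<Sum>k<L. g (sh k f)) \<partial>P) = real L * c"
  proof -
    have "(\<integral>f. (\<Sum>k<L. g (sh k f)) \<partial>P) = (\<Sum>k<L. (\<integral>f. g (sh k f) \<partial>P))"
      by (rule Bochner_Integration.integral_sum[where f="\<lambda>k x. g (sh k x)" and I="{..<L}"]) (use int_g in auto)
    also have "\<dots> = (\<Sum>k<L. c)" unfolding c_def by (simp add: int_shift[OF gm])
    finally show ?thesis by simp
  qed
  moreover have "(\<integral>f. t * real L + (\<Sum>k<L. indicator Bad (sh k f)) + real N \<partial>P) = t * real L + real L * prob Bad + real N"
  proof -
    have i2: "(\<integral>f. (\<Sum>k<L. indicator Bad (sh k f) :: real) \<partial>P) = real L * prob Bad"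
    proof -
      have "(\<integral>f. (\<Sum>k<L. indicator Bad (sh k f) :: real) \<partial>P) = (\<Sum>k<L. (\<integral>f. (indicator Bad (sh k f) :: real) \<partial>P))"
        by (rule Bochner_Integration.integral_sum[where f="\<lambda>k x. indicator Bad (sh k x) :: real" and I="{..<L}"]) (use int_i in auto)
      also have "\<dots> = (\<Sum>k<L. (\<integral>f. (indicator Bad f :: real) \<partial>P))"
        using int_shift[of "indicator Bad :: _ \<Rightarrow> real"] Bad_sets by simp
      also have "(\<integral>f. (indicator Bad f :: real) \<partial>P) = prob Bad"
        using sets_PI[OF Bad_sets] by simp
      finally show ?thesis by simp
    qed
    have ii: "integrable P (\<lambda>f. (\<Sum>k<L. indicator Bad (sh k f) :: real))"
      using int_i by auto
    have "(\<integral>f. t * real L + (\<Sum>k<L. indicator Bad (sh k f)) + real N \<partial>P)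
        = (\<integral>f. t * real L + (\<Sum>k<L. indicator Bad (sh k f)) \<partial>P) + (\<integral>f. real N \<partial>P)"
      by (rule Bochner_Integration.integral_add) (use ii in auto)
    also have "(\<integral>f. t * real L + (\<Sum>k<L. indicator Bad (sh k f)) \<partial>P)
        = (\<integral>f. t * real L \<partial>P) + (\<integral>f. (\<Sum>k<L. indicator Bad (sh k f) :: real) \<partial>P)"
      by (rule Bochner_Integration.integral_add) (use ii in auto)
    finally show ?thesis using i2 by (simp add: prob_space)
  qed
  ultimately have ineq: "real L * c \<le> t * real L + real L * prob Bad + real N" by simp
  have Lpos: "0 < L" using L \<delta>0 by (cases L) auto
  have "real L * prob Bad \<le> real L * \<delta>" using pBad Lpos by (intro mult_left_mono) auto
  then have "real L * c < t * real L + real L * \<delta> + real L * \<delta>" using ineq L by linarith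
  then have "real L * c < real L * (t + 2 * \<delta>)" by (simp add: algebra_simps)
  then have "c < t + 2 * \<delta>" using Lpos by simp
  then show False using t unfolding \<delta>_def c_def by (simp add: field_simps)
qed

lemma io_null:
  assumes gm: "g \<in> borel_measurable PS" and g01: "\<And>f. 0 \<le> g f \<and> g f \<le> 1"
    and s: "s < (\<integral>f. g f \<partial>P)"
  shows "prob {f. io g s f} = 0"
proof -
  define t where "t = (s + (\<integral>f. g f \<partial>P)) / 2"
  have st: "s < t" "t < (\<integral>f. g f \<partial>P)" using s unfolding t_def by auto
  obtain j where j: "inverse (real (Suc j)) < t - s" using reals_Archimedean[of "t - s"] st by auto
  have sub: "{f. io g s f} \<subseteq> Bs g t"
  proof
    fix f assume "f \<in> {f. io g s f}"
    then have iof: "io g s f" by simp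
    have "s \<le> t - 1 / real (Suc j)" using j by (simp add: inverse_eq_divide)
    then have "io g (t - 1 / real (Suc j)) f" by (rule io_mono[OF iof])
    then show "f \<in> Bs g t" unfolding Bs_def by blast
  qed
  have "prob {f. io g s f} \<le> prob (Bs g t)"
    by (rule finite_measure_mono[OF sub]) (use Bs_sets[OF gm] sets_P in auto)
  then show ?thesis using KW[OF gm g01 st(2)] measure_nonneg[of P "{f. io g s f}"] by linarith
qed

theorem ergodic_avg:
  assumes gm: "g \<in> borel_measurable PS" and g01: "\<And>f. 0 \<le> g f \<and> g f \<le> 1"
  shows "AE f in P. (\<lambda>n. Sg g n f / real n) \<longlonglongrightarrow> (\<integral>f. g f \<partial>P)"
proof -
  define c where "c = (\<integral>f. g f \<partial>P)"
  define h where "h f = 1 - g f" for f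
  have hm: "h \<in> borel_measurable PS" unfolding h_def using gm by measurable
  have h01: "\<And>f. 0 \<le> h f \<and> h f \<le> 1" unfolding h_def using g01 by auto
  have intg: "integrable P g"
    by (rule bounded_int[OF gm, where B=1]) (use g01 in \<open>auto simp: abs_le_iff\<close>)
  have ch: "(\<integral>f. h f \<partial>P) = 1 - c"
    unfolding h_def c_def using intg by (simp add: prob_space)
  have Sgh: "Sg h n f = real n - Sg g n f" for n f
    unfolding Sg_def h_def by (simp add: sum_subtractf)
  have A1: "AE f in P. \<forall>j::nat. \<not> io g (c - 1 / real (Suc j)) f"
  proof (subst AE_all_countable, intro allI)
    fix j
    have "prob {f. io g (c - 1 / real (Suc j)) f} = 0"
      by (rule io_null[OF gm g01]) (simp add: c_def)
    then show "AE f in P. \<not> io g (c - 1 / real (Suc j)) f"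
      using prob_eq_0[OF sets_PI[OF io_sets[OF gm]]] by simp
  qed
  have A2: "AE f in P. \<forall>j::nat. \<not> io h ((1 - c) - 1 / real (Suc j)) f"
  proof (subst AE_all_countable, intro allI)
    fix j
    have "prob {f. io h ((1 - c) - 1 / real (Suc j)) f} = 0"
      by (rule io_null[OF hm h01]) (simp add: ch)
    then show "AE f in P. \<not> io h ((1 - c) - 1 / real (Suc j)) f"
      using prob_eq_0[OF sets_PI[OF io_sets[OF hm]]] by simp
  qed
  show ?thesis unfolding c_def[symmetric]
  proof (rule AE_mp[OF AE_conjI[OF A1 A2]], rule AE_I2, safe)
    fix f assume n1: "\<forall>j. \<not> io g (c - 1 / real (Suc j)) f" and n2: "\<forall>j. \<not> io h (1 - c - 1 / real (Suc j)) f"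
    show "(\<lambda>n. Sg g n f / real n) \<longlonglongrightarrow> c"
    proof (rule LIMSEQ_I)
      fix r :: real assume r: "0 < r"
      obtain j where j: "inverse (real (Suc j)) < r" using reals_Archimedean[OF r] by blast
      obtain M1 where M1: "\<forall>n\<ge>M1. 0 < n \<longrightarrow> \<not> Sg g n f < (c - 1 / real (Suc j)) * real n"
        using n1 unfolding io_def by blast
      obtain M2 where M2: "\<forall>n\<ge>M2. 0 < n \<longrightarrow> \<not> Sg h n f < (1 - c - 1 / real (Suc j)) * real n"
        using n2 unfolding io_def by blast
      show "\<exists>no. \<forall>n\<ge>no. norm (Sg g n f / real n - c) < r"
      proof (intro exI allI impI)
        fix n assume n: "n \<ge> M1 + M2 + 1"
        have np: "0 < real n" using n by simp
        have lo: "(c - 1 / real (Suc j)) * real n \<le> Sg g n f" using M1[rule_format, of n] n by (simp add: not_less)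
        have hi: "(1 - c - 1 / real (Suc j)) * real n \<le> real n - Sg g n f" using M2[rule_format, of n] n Sgh[of n f] by (simp add: not_less)
        have lo': "c - 1 / real (Suc j) \<le> Sg g n f / real n" using lo np by (simp add: pos_le_divide_eq)
        have hi': "Sg g n f / real n \<le> c + 1 / real (Suc j)"
        proof -
          have "Sg g n f \<le> (c + 1 / real (Suc j)) * real n" using hi by (simp add: algebra_simps)
          then show ?thesis using np by (simp add: pos_divide_le_eq)
        qed
        have "1 / real (Suc j) < r" using j by (simp add: inverse_eq_divide)
        then show "norm (Sg g n f / real n - c) < r" using lo' hi' by (simp add: abs_less_iff)
      qed
    qed
  qed
qed

end

definition Ssum :: "(nat \<Rightarrow> int) \<Rightarrow> nat \<Rightarrow> int" where "Ssum x k = (\<Sum>i<k. x i)"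
definition NR :: "(nat \<Rightarrow> int) set" where "NR = {f. \<forall>j\<ge>1. (\<Sum>i<j. f i) \<noteq> 0}"
definition RF :: "nat \<Rightarrow> (nat \<Rightarrow> int) set" where "RF M = {f. \<forall>j\<in>{1..M}. (\<Sum>i<j. f i) \<noteq> 0}"

lemma Ssum_shift: "(\<Sum>i<j. sh k x i) = Ssum x (k + j) - Ssum x k"
proof (induction j)
  case 0 then show ?case by (simp add: Ssum_def)
next
  case (Suc j) then show ?case by (simp add: Ssum_def sh_def)
qed

lemma range_lower:
  "card {k\<in>{1..n}. sh k x \<in> NR} \<le> card ((\<lambda>k. Ssum x k) ` {1..n})"
proof -
  let ?K = "{k\<in>{1..n}. sh k x \<in> NR}"
  have inj: "inj_on (Ssum x) ?K"
  proof (rule inj_onI)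
    fix k k' assume k: "k \<in> ?K" and k': "k' \<in> ?K" and eq: "Ssum x k = Ssum x k'"
    show "k = k'"
    proof (rule ccontr)
      assume ne: "k \<noteq> k'"
      show False
      proof (cases "k < k'")
        case True
        have "(\<Sum>i<k'-k. sh k x i) \<noteq> 0" using k True unfolding NR_def by auto
        then show False using eq True by (simp add: Ssum_shift)
      next
        case False
        then have "k' < k" using ne by simp
        have "(\<Sum>i<k-k'. sh k' x i) \<noteq> 0" using k' \<open>k' < k\<close> unfolding NR_def by auto
        then show False using eq \<open>k' < k\<close> by (simp add: Ssum_shift)
      qed
    qed
  qed
  have "card ?K = card (Ssum x ` ?K)" using card_image[OF inj] by simp
  also have "\<dots> \<le> card ((\<lambda>k. Ssum x k) ` {1..n})" by (intro card_mono) auto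
  finally show ?thesis .
qed

lemma range_upper:
  "card ((\<lambda>k. Ssum x k) ` {1..n}) \<le> card {k\<in>{1..n}. sh k x \<in> RF M} + M"
proof -
  define LV where "LV = {k\<in>{1..n}. \<forall>m\<in>{k<..n}. Ssum x m \<noteq> Ssum x k}"
  have img: "(\<lambda>k. Ssum x k) ` {1..n} \<subseteq> Ssum x ` LV"
  proof
    fix s assume "s \<in> (\<lambda>k. Ssum x k) ` {1..n}"
    then obtain k where k: "k \<in> {1..n}" "s = Ssum x k" by blast
    define T where "T = {m\<in>{1..n}. Ssum x m = Ssum x k}"
    have fT: "finite T" "T \<noteq> {}" unfolding T_def using k by auto
    define m where "m = Max T"
    have mT: "m \<in> T" unfolding m_def using Max_in[OF fT] .
    have "m \<in> LV" unfolding LV_def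
    proof (intro CollectI conjI ballI)
      show "m \<in> {1..n}" using mT unfolding T_def by auto
      fix m' assume m': "m' \<in> {m<..n}"
      show "Ssum x m' \<noteq> Ssum x m"
      proof
        assume "Ssum x m' = Ssum x m"
        then have "m' \<in> T" using mT m' unfolding T_def by auto
        then have "m' \<le> m" unfolding m_def using Max_ge[OF fT(1)] by blast
        then show False using m' by auto
      qed
    qed
    moreover have "Ssum x m = s" using mT k unfolding T_def by auto
    ultimately show "s \<in> Ssum x ` LV" by blast
  qed
  have "card ((\<lambda>k. Ssum x k) ` {1..n}) \<le> card (Ssum x ` LV)"
    by (rule card_mono[OF _ img]) (simp add: LV_def)
  also have "\<dots> \<le> card LV" by (rule card_image_le) (simp add: LV_def)
  also have "\<dots> \<le> card ({k\<in>{1..n}. sh k x \<in> RF M} \<union> {n - M<..n})"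
  proof (rule card_mono)
    show "finite ({k\<in>{1..n}. sh k x \<in> RF M} \<union> {n - M<..n})" by simp
    show "LV \<subseteq> {k\<in>{1..n}. sh k x \<in> RF M} \<union> {n - M<..n}"
    proof
      fix k assume k: "k \<in> LV"
      show "k \<in> {k\<in>{1..n}. sh k x \<in> RF M} \<union> {n - M<..n}"
      proof (cases "k + M \<le> n")
        case True
        have "sh k x \<in> RF M" unfolding RF_def
        proof (intro CollectI ballI)
          fix j assume j: "j \<in> {1..M}"
          have "Ssum x (k + j) \<noteq> Ssum x k" using k j True unfolding LV_def by auto
          then show "(\<Sum>i<j. sh k x i) \<noteq> 0" by (simp add: Ssum_shift)
        qed
        then show ?thesis using k unfolding LV_def by auto
      next
        case False
        then show ?thesis using k unfolding LV_def by auto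
      qed
    qed
  qed
  also have "\<dots> \<le> card {k\<in>{1..n}. sh k x \<in> RF M} + card {n - M<..n}" by (rule card_Un_le)
  also have "\<dots> \<le> card {k\<in>{1..n}. sh k x \<in> RF M} + M" by simp
  finally show ?thesis .
qed

lemma card_Sg:
  "Sg (\<lambda>f. indicator A f) n x = real (card {k\<in>{..<n}. sh k x \<in> A})"
  unfolding Sg_def by (simp add: indicator_def sum.If_cases Int_def)

lemma card_shift_compare:
  fixes n :: nat
  shows "card {k\<in>{1..n}. P k} \<le> card {k\<in>{..<n}. P k} + 1"
  "card {k\<in>{..<n}. P k} \<le> card {k\<in>{1..n}. P k} + 1"
proof -
  have "{k\<in>{1..n}. P k} \<subseteq> {k\<in>{..<n}. P k} \<union> {n}" by auto
  then have "card {k\<in>{1..n}. P k} \<le> card ({k\<in>{..<n}. P k} \<union> {n})" by (intro card_mono) auto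
  also have "\<dots> \<le> card {k\<in>{..<n}. P k} + 1" using card_Un_le[of "{k\<in>{..<n}. P k}" "{n}"] by simp
  finally show "card {k\<in>{1..n}. P k} \<le> card {k\<in>{..<n}. P k} + 1" .
  have "{k\<in>{..<n}. P k} \<subseteq> {k\<in>{1..n}. P k} \<union> {0}" by auto
  then have "card {k\<in>{..<n}. P k} \<le> card ({k\<in>{1..n}. P k} \<union> {0})" by (intro card_mono) auto
  also have "\<dots> \<le> card {k\<in>{1..n}. P k} + 1" using card_Un_le[of "{k\<in>{1..n}. P k}" "{0}"] by simp
  finally show "card {k\<in>{..<n}. P k} \<le> card {k\<in>{1..n}. P k} + 1" .
qed

context
  fixes M :: "'a measure" and X :: "nat \<Rightarrow> 'a \<Rightarrow> int"
  assumes M: "prob_space M"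
    and X_meas: "\<And>k. X k \<in> measurable M (count_space UNIV)"
    and X_indep: "prob_space.indep_vars M (\<lambda>_. count_space UNIV) X UNIV"
    and X_ident: "\<And>k. distr M (count_space UNIV) (X k) = distr M (count_space UNIV) (X 0)"
begin

interpretation M: prob_space M by (rule M)

lemma psi_meas: "(\<lambda>\<omega> i. X (n + i) \<omega>) \<in> M \<rightarrow>\<^sub>M PS"
  unfolding PS_def by (rule measurable_PiM_single') (auto simp: X_meas)

lemma X_ident_meas: "measure M (X k -` B \<inter> space M) = measure M (X 0 -` B \<inter> space M)"
proof -
  have "measure (distr M (count_space UNIV) (X k)) B = measure (distr M (count_space UNIV) (X 0)) B"
    using X_ident[of k] by simp
  then show ?thesis using X_meas by (simp add: measure_distr)
qed

lemma cyl_value: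
  assumes J: "finite J" "J \<noteq> {}"
  shows "measure M ((\<lambda>\<omega> i. X (n + i) \<omega>) -` prod_emb UNIV (\<lambda>_. count_space UNIV) J (Pi\<^sub>E J A) \<inter> space M)
        = (\<Prod>j\<in>J. measure M (X 0 -` A j \<inter> space M))"
proof -
  have set_eq: "(\<lambda>\<omega> i. X (n + i) \<omega>) -` prod_emb UNIV (\<lambda>_. count_space UNIV) J (Pi\<^sub>E J A) \<inter> space M
      = (\<Inter>i\<in>(\<lambda>j. n + j) ` J. X i -` A (i - n) \<inter> space M)"
    using J(2) by (auto simp: prod_emb_def PiE_iff space_PiM)
  have "measure M (\<Inter>i\<in>(\<lambda>j. n + j) ` J. X i -` A (i - n) \<inter> space M)
      = (\<Prod>i\<in>(\<lambda>j. n + j) ` J. measure M (X i -` A (i - n) \<inter> space M))"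
    by (rule M.indep_varsD[OF X_indep]) (use J in auto)
  also have "\<dots> = (\<Prod>j\<in>J. measure M (X (n + j) -` A j \<inter> space M))"
    by (subst prod.reindex) (auto simp: inj_on_def)
  also have "\<dots> = (\<Prod>j\<in>J. measure M (X 0 -` A j \<inter> space M))"
    by (intro prod.cong refl X_ident_meas)
  finally show ?thesis unfolding set_eq .
qed

lemma shift_law: "distr M PS (\<lambda>\<omega> i. X (n + i) \<omega>) = distr M PS (\<lambda>\<omega> i. X i \<omega>)"
proof -
  have m0: "(\<lambda>\<omega> i. X i \<omega>) \<in> M \<rightarrow>\<^sub>M PS" using psi_meas[of 0] by simp
  show ?thesis unfolding PS_def
  proof (rule measure_eqI_PiM_infinite)
    show "sets (distr M (Pi\<^sub>M UNIV (\<lambda>_. count_space UNIV)) (\<lambda>\<omega> i. X (n + i) \<omega>)) = sets (Pi\<^sub>M UNIV (\<lambda>_. count_space UNIV))" by simp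
    show "sets (distr M (Pi\<^sub>M UNIV (\<lambda>_. count_space UNIV)) (\<lambda>\<omega> i. X i \<omega>)) = sets (Pi\<^sub>M UNIV (\<lambda>_. count_space UNIV))" by simp
    show "finite_measure (distr M (Pi\<^sub>M UNIV (\<lambda>_. count_space UNIV)) (\<lambda>\<omega> i. X (n + i) \<omega>))"
      using M.prob_space_distr[OF psi_meas[of n]] unfolding PS_def by (simp add: prob_space_def)
    fix A :: "nat \<Rightarrow> int set" and J :: "nat set"
    assume J: "finite J" "J \<subseteq> UNIV" "\<And>i. i \<in> J \<Longrightarrow> A i \<in> sets (count_space UNIV)"
    let ?C = "prod_emb UNIV (\<lambda>_. count_space UNIV) J (Pi\<^sub>E J A)"
    have C: "?C \<in> sets (Pi\<^sub>M UNIV (\<lambda>_. count_space UNIV))" by (rule sets_PiM_I) (use J in auto)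
    have mm: "measure M ((\<lambda>\<omega> i. X (n + i) \<omega>) -` ?C \<inter> space M) = measure M ((\<lambda>\<omega> i. X i \<omega>) -` ?C \<inter> space M)"
    proof (cases "J = {}")
      case True
      then show ?thesis by (simp add: prod_emb_def space_PiM vimage_def restrict_def)
    next
      case False
      show ?thesis using cyl_value[OF J(1) False, of n A] cyl_value[OF J(1) False, of 0 A] by simp
    qed
    show "emeasure (distr M (Pi\<^sub>M UNIV (\<lambda>_. count_space UNIV)) (\<lambda>\<omega> i. X (n + i) \<omega>)) ?C =
          emeasure (distr M (Pi\<^sub>M UNIV (\<lambda>_. count_space UNIV)) (\<lambda>\<omega> i. X i \<omega>)) ?C"
      using psi_meas[of n] m0 C mm unfolding PS_def by (simp add: emeasure_distr M.emeasure_eq_measure)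
  qed
qed

end

context
  fixes M :: "'a measure" and X :: "nat \<Rightarrow> 'a \<Rightarrow> int"
  assumes M: "prob_space M"
    and X_meas: "\<And>k. X k \<in> measurable M (count_space UNIV)"
    and X_indep: "prob_space.indep_vars M (\<lambda>_. count_space UNIV) X UNIV"
    and X_ident: "\<And>k. distr M (count_space UNIV) (X k) = distr M (count_space UNIV) (X 0)"
begin

interpretation M: prob_space M by (rule M)

lemma tail_zero_one:
  assumes E: "E \<in> sets PS" and inv: "\<And>m. sh m -` E = E"
  shows "measure M ((\<lambda>\<omega> i. X i \<omega>) -` E \<inter> space M) = 0 \<or> measure M ((\<lambda>\<omega> i. X i \<omega>) -` E \<inter> space M) = 1"
proof -
  define A where "A i = sigma_sets (space M) {X i -` B \<inter> space M | B. B \<in> sets (count_space (UNIV::int set))}" for i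
  have sa: "sigma_algebra (space M) (A i)" for i
    unfolding A_def by (rule sigma_algebra_sigma_sets) auto
  have ind: "M.indep_sets A UNIV" using X_indep unfolding M.indep_vars_def A_def by (elim conjE)
  have tail: "(\<lambda>\<omega> i. X i \<omega>) -` E \<inter> space M \<in> M.tail_events A"
    unfolding M.tail_events_def
  proof (rule InterI, clarify)
    fix n
    define G where "G = \<Union> (A ` {n..})"
    have GP: "G \<subseteq> Pow (space M)"
    proof
      fix x assume "x \<in> G"
      then obtain i where xi: "x \<in> A i" unfolding G_def by auto
      have "{X i -` B \<inter> space M | B. B \<in> sets (count_space (UNIV::int set))} \<subseteq> Pow (space M)" by auto
      then have "x \<subseteq> space M" using xi unfolding A_def by (rule sigma_sets_into_sp)
      then show "x \<in> Pow (space M)" by simp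
    qed
    define Mn where "Mn = sigma (space M) G"
    have spMn: "space Mn = space M" unfolding Mn_def using GP by (simp add: space_measure_of)
    have setsMn: "sets Mn = sigma_sets (space M) G" unfolding Mn_def using GP by (simp add: sets_measure_of)
    have compm: "(\<lambda>\<omega>. X (n + i) \<omega>) \<in> measurable Mn (count_space UNIV)" for i
    proof (rule measurableI)
      show "\<And>x. x \<in> space Mn \<Longrightarrow> X (n + i) x \<in> space (count_space UNIV)" by simp
      fix B :: "int set" assume "B \<in> sets (count_space UNIV)"
      have "X (n + i) -` B \<inter> space M \<in> A (n + i)" unfolding A_def by (rule sigma_sets.Basic) auto
      then have "X (n + i) -` B \<inter> space M \<in> G" unfolding G_def by auto
      then show "(\<lambda>\<omega>. X (n + i) \<omega>) -` B \<inter> space Mn \<in> sets Mn"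
        unfolding spMn setsMn by (auto intro: sigma_sets.Basic)
    qed
    have psim: "(\<lambda>\<omega> i. X (n + i) \<omega>) \<in> measurable Mn PS"
      unfolding PS_def by (rule measurable_PiM_single') (auto simp: compm)
    have "(\<lambda>\<omega> i. X (n + i) \<omega>) -` E \<inter> space Mn \<in> sets Mn" by (rule measurable_sets[OF psim E])
    moreover have "(\<lambda>\<omega> i. X (n + i) \<omega>) -` E \<inter> space Mn = (\<lambda>\<omega> i. X i \<omega>) -` E \<inter> space M"
    proof -
      have "(\<lambda>i. X (n + i) \<omega>) \<in> E \<longleftrightarrow> (\<lambda>i. X i \<omega>) \<in> E" for \<omega>
      proof -
        have "(\<lambda>i. X (n + i) \<omega>) = sh n (\<lambda>i. X i \<omega>)" unfolding sh_def by simp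
        then have "(\<lambda>i. X (n + i) \<omega>) \<in> E \<longleftrightarrow> (\<lambda>i. X i \<omega>) \<in> sh n -` E" by simp
        then show ?thesis using inv[of n] by simp
      qed
      then show ?thesis unfolding spMn by auto
    qed
    ultimately show "(\<lambda>\<omega> i. X i \<omega>) -` E \<inter> space M \<in> sigma_sets (space M) (\<Union> (A ` {n..}))"
      unfolding setsMn G_def by simp
  qed
  show ?thesis using M.kolmogorov_0_1_law[OF sa ind tail] .
qed

lemma walk_erg: "erg (distr M PS (\<lambda>\<omega> i. X i \<omega>))"
proof -
  have pm: "(\<lambda>\<omega> i. X i \<omega>) \<in> M \<rightarrow>\<^sub>M PS" using psi_meas[OF M X_meas X_indep X_ident, of 0] by simp
  show ?thesis
  proof (rule erg.intro)
    show "prob_space (distr M PS (\<lambda>\<omega> i. X i \<omega>))" by (rule M.prob_space_distr[OF pm])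
    show "erg_axioms (distr M PS (\<lambda>\<omega> i. X i \<omega>))"
    proof (rule erg_axioms.intro)
      show "sets (distr M PS (\<lambda>\<omega> i. X i \<omega>)) = sets PS" by simp
      fix n
      have "distr (distr M PS (\<lambda>\<omega> i. X i \<omega>)) PS (sh n) = distr M PS (sh n \<circ> (\<lambda>\<omega> i. X i \<omega>))"
        by (rule distr_distr[OF sh_meas pm])
      also have "sh n \<circ> (\<lambda>\<omega> i. X i \<omega>) = (\<lambda>\<omega> i. X (n + i) \<omega>)" unfolding sh_def by (simp add: comp_def)
      also have "distr M PS (\<lambda>\<omega> i. X (n + i) \<omega>) = distr M PS (\<lambda>\<omega> i. X i \<omega>)"
        by (rule shift_law[OF M X_meas X_indep X_ident])
      finally show "distr (distr M PS (\<lambda>\<omega> i. X i \<omega>)) PS (sh n) = distr M PS (\<lambda>\<omega> i. X i \<omega>)" .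
    next
      fix E assume E: "E \<in> sets PS" and inv: "\<And>m. sh m -` E = E"
      have "measure (distr M PS (\<lambda>\<omega> i. X i \<omega>)) E = measure M ((\<lambda>\<omega> i. X i \<omega>) -` E \<inter> space M)"
        by (rule measure_distr[OF pm E])
      then show "measure (distr M PS (\<lambda>\<omega> i. X i \<omega>)) E = 0 \<or> measure (distr M PS (\<lambda>\<omega> i. X i \<omega>)) E = 1"
        using tail_zero_one[OF E inv] by simp
    qed
  qed
qed

end

lemma NR_sets[measurable]: "NR \<in> sets PS"
proof -
  have "NR = {f\<in>space PS. \<forall>j\<ge>1. (\<Sum>i<j. real_of_int (f i)) \<noteq> 0}"
    unfolding NR_def space_PS by (simp flip: of_int_sum)
  also have "\<dots> \<in> sets PS" by measurable
  finally show ?thesis .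
qed

lemma RF_sets[measurable]: "RF m \<in> sets PS"
proof -
  have "RF m = {f\<in>space PS. \<forall>j\<in>{1..m}. (\<Sum>i<j. real_of_int (f i)) \<noteq> 0}"
    unfolding RF_def space_PS by (simp flip: of_int_sum)
  also have "\<dots> \<in> sets PS" by measurable
  finally show ?thesis .
qed

lemma RF_decseq: "decseq RF"
  unfolding decseq_def RF_def by auto

lemma RF_Inter: "(\<Inter>m. RF m) = NR"
proof (intro set_eqI iffI)
  fix f assume f: "f \<in> (\<Inter>m. RF m)"
  show "f \<in> NR" unfolding NR_def
  proof (intro CollectI allI impI)
    fix j :: nat assume j: "j \<ge> 1"
    have "f \<in> RF j" using f by blast
    then show "(\<Sum>i<j. f i) \<noteq> 0" using j unfolding RF_def by auto
  qed
next
  fix f assume "f \<in> NR" then show "f \<in> (\<Inter>m. RF m)" unfolding NR_def RF_def by auto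
qed


lemma limit_sandwich_range:
  fixes R a :: "nat \<Rightarrow> real" and b :: "nat \<Rightarrow> nat \<Rightarrow> real" and qq :: "nat \<Rightarrow> real"
  assumes a: "a \<longlonglongrightarrow> q" and b: "\<And>m. b m \<longlonglongrightarrow> qq m" and qq: "qq \<longlonglongrightarrow> q"
    and lo: "\<And>n. a n - 1 / real n \<le> R n"
    and hi: "\<And>m n. R n \<le> b m n + (1 + real m) / real n"
  shows "R \<longlonglongrightarrow> q"
proof (rule LIMSEQ_I)
  fix r :: real assume r: "0 < r"
  obtain m where m: "qq m < q + r / 3"
  proof -
    have "eventually (\<lambda>m. qq m < q + r / 3) sequentially" using order_tendstoD(2)[OF qq, of "q + r / 3"] r by simp
    then show ?thesis using that by (auto simp: eventually_sequentially)
  qed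
  have e1: "eventually (\<lambda>n. a n > q - r / 2) sequentially" using order_tendstoD(1)[OF a, of "q - r / 2"] r by simp
  have e2: "eventually (\<lambda>n. b m n < qq m + r / 3) sequentially" using order_tendstoD(2)[OF b[of m], of "qq m + r / 3"] r by simp
  have inv0: "(\<lambda>n. 1 / real n) \<longlonglongrightarrow> 0" using lim_inverse_n' by simp
  have e3: "eventually (\<lambda>n. 1 / real n < r / 2) sequentially" using order_tendstoD(2)[OF inv0, of "r / 2"] r by simp
  have inv1: "(\<lambda>n. (1 + real m) / real n) \<longlonglongrightarrow> 0"
  proof -
    have "(\<lambda>n. (1 + real m) * (1 / real n)) \<longlonglongrightarrow> (1 + real m) * 0" by (intro tendsto_intros inv0)
    then show ?thesis by simp
  qed
  have e4: "eventually (\<lambda>n. (1 + real m) / real n < r / 3) sequentially" using order_tendstoD(2)[OF inv1, of "r / 3"] r by simp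
  have "eventually (\<lambda>n. norm (R n - q) < r) sequentially"
    using e1 e2 e3 e4
  proof eventually_elim
    case (elim n)
    have "R n > q - r" using lo[of n] elim(1,3) by linarith
    moreover have "R n < q + r" using hi[of n m] elim(2,4) m by linarith
    ultimately show ?case by (simp add: abs_less_iff)
  qed
  then show "\<exists>no. \<forall>n\<ge>no. norm (R n - q) < r" by (simp add: eventually_sequentially)
qed

context
  fixes M :: "'a measure" and X :: "nat \<Rightarrow> 'a \<Rightarrow> int" and S :: "nat \<Rightarrow> 'a \<Rightarrow> int"
  assumes M: "prob_space M"
    and X_meas: "\<And>k. X k \<in> measurable M (count_space UNIV)"
    and X_indep: "prob_space.indep_vars M (\<lambda>_. count_space UNIV) X UNIV"
    and X_ident: "\<And>k. distr M (count_space UNIV) (X k) = distr M (count_space UNIV) (X 0)"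
    and S_def: "\<And>n \<omega>. S n \<omega> = (\<Sum>i<n. X i \<omega>)"
begin

interpretation M: prob_space M by (rule M)

lemma range_limit:
  "AE \<omega> in M. (\<lambda>n. real (card ((\<lambda>k. S k \<omega>) ` {1..n})) / real n)
       \<longlonglongrightarrow> measure M {\<omega>' \<in> space M. \<forall>k\<ge>1. S k \<omega>' \<noteq> 0}"
proof -
  define \<pi> where "\<pi> \<omega> = (\<lambda>i. X i \<omega>)" for \<omega>
  define P where "P = distr M PS \<pi>"
  have pm: "\<pi> \<in> M \<rightarrow>\<^sub>M PS" unfolding \<pi>_def using psi_meas[OF M X_meas X_indep X_ident, of 0] by simp
  interpret erg P unfolding P_def \<pi>_def by (rule walk_erg[OF M X_meas X_indep X_ident])
  define q where "q = measure M {\<omega>' \<in> space M. \<forall>k\<ge>1. S k \<omega>' \<noteq> 0}"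
  define qq where "qq m = measure P (RF m)" for m
  have gN: "(\<lambda>f. indicator NR f :: real) \<in> borel_measurable PS" by measurable
  have gR: "(\<lambda>f. indicator (RF m) f :: real) \<in> borel_measurable PS" for m by measurable
  have intN: "(\<integral>f. (indicator NR f :: real) \<partial>P) = q"
  proof -
    have "(\<integral>f. (indicator NR f :: real) \<partial>P) = measure P NR" using sets_PI[OF NR_sets] by simp
    also have "\<dots> = measure M (\<pi> -` NR \<inter> space M)" unfolding P_def by (rule measure_distr[OF pm NR_sets])
    also have "\<pi> -` NR \<inter> space M = {\<omega>' \<in> space M. \<forall>k\<ge>1. S k \<omega>' \<noteq> 0}"
      unfolding \<pi>_def NR_def S_def by auto
    finally show ?thesis unfolding q_def .
  qed
  have intR: "(\<integral>f. (indicator (RF m) f :: real) \<partial>P) = qq m" for m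
    unfolding qq_def using sets_PI[OF RF_sets] by simp
  have qq_lim: "qq \<longlonglongrightarrow> q"
  proof -
    have "(\<lambda>m. measure P (RF m)) \<longlonglongrightarrow> measure P (\<Inter>m. RF m)"
      by (rule finite_Lim_measure_decseq) (use sets_PI[OF RF_sets] RF_decseq in auto)
    moreover have "measure P (\<Inter>m. RF m) = q"
      using intN sets_PI[OF NR_sets] unfolding RF_Inter by simp
    ultimately show ?thesis unfolding qq_def by simp
  qed
  have AEP: "AE f in P. (\<lambda>n. Sg (indicator NR) n f / real n) \<longlonglongrightarrow> q
      \<and> (\<forall>m. (\<lambda>n. Sg (indicator (RF m)) n f / real n) \<longlonglongrightarrow> qq m)"
  proof (rule AE_conjI)
    show "AE f in P. (\<lambda>n. Sg (indicator NR) n f / real n) \<longlonglongrightarrow> q"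
      using ergodic_avg[OF gN] intN by simp
    show "AE f in P. \<forall>m. (\<lambda>n. Sg (indicator (RF m)) n f / real n) \<longlonglongrightarrow> qq m"
    proof (subst AE_all_countable, intro allI)
      fix m show "AE f in P. (\<lambda>n. Sg (indicator (RF m)) n f / real n) \<longlonglongrightarrow> qq m"
        using ergodic_avg[OF gR[of m]] intR[of m] by simp
    qed
  qed
  have AEM: "AE \<omega> in M. (\<lambda>n. Sg (indicator NR) n (\<pi> \<omega>) / real n) \<longlonglongrightarrow> q
      \<and> (\<forall>m. (\<lambda>n. Sg (indicator (RF m)) n (\<pi> \<omega>) / real n) \<longlonglongrightarrow> qq m)"
    using AE_distrD[OF pm AEP[unfolded P_def]] .
  show ?thesis unfolding q_def[symmetric]
  proof (rule AE_mp[OF AEM], rule AE_I2, safe)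
    fix \<omega>
    assume A1: "(\<lambda>n. Sg (indicator NR) n (\<pi> \<omega>) / real n) \<longlonglongrightarrow> q"
      and A2: "\<forall>m. (\<lambda>n. Sg (indicator (RF m)) n (\<pi> \<omega>) / real n) \<longlonglongrightarrow> qq m"
    let ?x = "\<pi> \<omega>"
    have Sx: "S k \<omega> = Ssum ?x k" for k unfolding S_def Ssum_def \<pi>_def by simp
    have img: "(\<lambda>k. S k \<omega>) ` {1..n} = (\<lambda>k. Ssum ?x k) ` {1..n}" for n using Sx by simp
    show "(\<lambda>n. real (card ((\<lambda>k. S k \<omega>) ` {1..n})) / real n) \<longlonglongrightarrow> q"
    proof (rule limit_sandwich_range[OF A1 A2[rule_format] qq_lim])
      fix n
      have c1: "card {k\<in>{..<n}. sh k ?x \<in> NR} \<le> card {k\<in>{1..n}. sh k ?x \<in> NR} + 1"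
        by (rule card_shift_compare(2))
      have c2: "card {k\<in>{1..n}. sh k ?x \<in> NR} \<le> card ((\<lambda>k. Ssum ?x k) ` {1..n})"
        by (rule range_lower)
      have "Sg (indicator NR) n ?x \<le> real (card ((\<lambda>k. S k \<omega>) ` {1..n})) + 1"
        unfolding card_Sg img using c1 c2 by linarith
      then have "(Sg (indicator NR) n ?x - 1) / real n \<le> real (card ((\<lambda>k. S k \<omega>) ` {1..n})) / real n"
        by (intro divide_right_mono) auto
      then show "Sg (indicator NR) n ?x / real n - 1 / real n \<le> real (card ((\<lambda>k. S k \<omega>) ` {1..n})) / real n"
        by (simp add: diff_divide_distrib)
    next
      fix m n
      have c1: "card {k\<in>{1..n}. sh k ?x \<in> RF m} \<le> card {k\<in>{..<n}. sh k ?x \<in> RF m} + 1"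
        by (rule card_shift_compare(1))
      have c2: "card ((\<lambda>k. Ssum ?x k) ` {1..n}) \<le> card {k\<in>{1..n}. sh k ?x \<in> RF m} + m"
        by (rule range_upper)
      have "real (card ((\<lambda>k. S k \<omega>) ` {1..n})) \<le> Sg (indicator (RF m)) n ?x + (1 + real m)"
        unfolding card_Sg img using c1 c2 by linarith
      then have "real (card ((\<lambda>k. S k \<omega>) ` {1..n})) / real n \<le> (Sg (indicator (RF m)) n ?x + (1 + real m)) / real n"
        by (intro divide_right_mono) auto
      then show "real (card ((\<lambda>k. S k \<omega>) ` {1..n})) / real n \<le> Sg (indicator (RF m)) n ?x / real n + (1 + real m) / real n"
        by (simp add: add_divide_distrib)
    qed
  qed
qed

end

theorem theorem1:
  fixes M :: "'a measure" and N :: "'b measure"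
    and X :: "nat \<Rightarrow> 'a \<Rightarrow> int"
    and S :: "nat \<Rightarrow> 'a \<Rightarrow> int"
    and \<xi> :: "int \<Rightarrow> 'b \<Rightarrow> real"
    and u :: "nat \<Rightarrow> real"
    and \<alpha> \<tau> C\<^sub>1 C\<^sub>2 :: real
    and \<mu> :: "real measure"
  assumes M: "prob_space M" and N: "prob_space N"
    and X_meas: "\<And>k. X k \<in> measurable M (count_space UNIV)"
    and X_indep: "prob_space.indep_vars M (\<lambda>_. count_space UNIV) X UNIV"
    and X_ident: "\<And>k. distr M (count_space UNIV) (X k) = distr M (count_space UNIV) (X 0)"
    and S_def: "\<And>n \<omega>. S n \<omega> = (\<Sum>i<n. X i \<omega>)"
    and \<alpha>: "0 < \<alpha>" "\<alpha> < 1"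
    and \<mu>_prob: "prob_space \<mu>" and \<mu>_sets: "sets \<mu> = sets borel"
    and C1_pos: "C\<^sub>1 > 0"
    and \<mu>_char: "\<And>\<theta>. char \<mu> \<theta> =
        exp (- (complex_of_real (\<bar>\<theta>\<bar> powr \<alpha>)) * (complex_of_real C\<^sub>1 + \<i> * complex_of_real (C\<^sub>2 * sgn \<theta>)))"
    and attraction: "\<And>x. (\<lambda>n. measure M {\<omega> \<in> space M. real_of_int (S n \<omega>) / real n powr (1 / \<alpha>) \<le> x})
                          \<longlonglongrightarrow> cdf \<mu> x"
    and \<xi>_meas: "\<And>k. \<xi> k \<in> borel_measurable N"
    and stat: "stationary_seq N \<xi>"
    and \<tau>: "\<tau> \<ge> 0"
    and tail: "(\<lambda>n. real n * measure N {\<eta> \<in> space N. \<xi> 0 \<eta> > u n}) \<longlonglongrightarrow> \<tau>"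
    and DD': "\<exists>a l. condD N \<xi> u a l \<and> condD' N \<xi> u a l"
  shows "AE \<omega> in M.
           (\<lambda>n. measure N {\<eta> \<in> space N. \<forall>k\<in>{1..n}. \<xi> (S k \<omega>) \<eta> \<le> u n})
             \<longlonglongrightarrow> exp (- \<tau> * measure M {\<omega>' \<in> space M. \<forall>k\<ge>1. S k \<omega>' \<noteq> 0})"
proof -
  from DD' obtain a l where D: "condD N \<xi> u a l" and D': "condD' N \<xi> u a l" by blast
  have AE: "AE \<omega> in M. (\<lambda>n. real (card ((\<lambda>k. S k \<omega>) ` {1..n})) / real n)
       \<longlonglongrightarrow> measure M {\<omega>' \<in> space M. \<forall>k\<ge>1. S k \<omega>' \<noteq> 0}"
    by (rule range_limit[OF M X_meas X_indep X_ident S_def])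
  show ?thesis
  proof (rule AE_mp[OF AE], rule AE_I2, rule impI)
    fix \<omega>
    assume lim: "(\<lambda>n. real (card ((\<lambda>k. S k \<omega>) ` {1..n})) / real n)
       \<longlonglongrightarrow> measure M {\<omega>' \<in> space M. \<forall>k\<ge>1. S k \<omega>' \<noteq> 0}"
    define V where "V n = (\<lambda>k. S k \<omega>) ` {1..n}" for n
    have fV: "finite (V n)" for n unfolding V_def by simp
    have cV: "card (V n) \<le> n" for n
    proof -
      have "card (V n) \<le> card {1..n}" unfolding V_def by (rule card_image_le) simp
      then show ?thesis by simp
    qed
    have "(\<lambda>n. jointF N \<xi> (V n) (u n)) \<longlonglongrightarrow> exp (- \<tau> * measure M {\<omega>' \<in> space M. \<forall>k\<ge>1. S k \<omega>' \<noteq> 0})"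
      by (rule extreme_limit[OF N \<xi>_meas stat tail D D' fV cV lim[folded V_def]])
    moreover have "jointF N \<xi> (V n) (u n) = measure N {\<eta> \<in> space N. \<forall>k\<in>{1..n}. \<xi> (S k \<omega>) \<eta> \<le> u n}" for n
      unfolding jointF_def V_def by simp
    ultimately show "(\<lambda>n. measure N {\<eta> \<in> space N. \<forall>k\<in>{1..n}. \<xi> (S k \<omega>) \<eta> \<le> u n})
             \<longlonglongrightarrow> exp (- \<tau> * measure M {\<omega>' \<in> space M. \<forall>k\<ge>1. S k \<omega>' \<noteq> 0})" by simp
  qed
qed

end
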